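(* Let $a\in C^\infty(\mathbb{R})$ satisfy condition (A) and $\beta\in\mathbb{R}$. Then for every $f\in L^2(\mathbb{T})$ with $E^a_0(f)<\infty$, \[ |E^a_1(f)|\lesssim\|f\|_{L^2}^2\,E^a_0(f), \] with implicit constant depending only on $\beta$ and the constants in (A).
   Context: $\mathbb{T}=\mathbb{R}/2\pi\mathbb{Z}$; for $f$ on $\mathbb{T}$, $\hat f(\xi)$, $\xi\in\mathbb{Z}$, are its Fourier coefficients (so $\|f\|_{L^2}^2$ is comparable to $\sum_\xi|\hat f(\xi)|^2$), and $\hat{\bar f}(\xi)=\overline{\hat f(-\xi)}$. Condition (A) on $a$: $a$ positive, even, non-decreasing on $[0,\infty)$, constant on $[-1,1]$; $a(2\xi)\lesssim a(\xi)$ for $\xi>0$; $a(N_1)/a(N_2)\gtrsim(N_1/N_2)^{1/2}$ for dyadic $N_1>N_2\ge1$; $|\partial_\xi^ja(\xi)|\lesssim\langle\xi\rangle^{-j}a(\xi)$ for $1\le j\le5$. Notation $\xi_{ij\ldots}=\xi_i+\xi_j+\cdots$; $\Gamma_m=\{(\xi_1,\dots,\xi_m):\xi_{1\cdots m}=0\}$. Let $q$ be the smooth positive function on $\mathbb{R}^2$ with $q(\xi_1,\xi_2)=\int_0^1(\xi a(\xi))'(-\xi_2+\xi_{12}t)\,dt$ (equal to $(\xi_1a(\xi_1)+\xi_2a(\xi_2))/\xi_{12}$ when $\xi_{12}\ne0$). On $\Gamma_4\subset\mathbb{R}^4$ define \[ b^a_4(\xi_1,\xi_2,\xi_3,\xi_4):=\frac{i\beta\,\xi_{23}}{4}\,\frac{\big[\int_0^1(\partial_1q-\partial_2q)(\xi_1+\xi_{23}t,\xi_2-\xi_{23}t)\,dt\big]^2}{\big[\sqrt{q(\xi_1,\xi_2)}+\sqrt{q(\xi_3,\xi_4)}\big]^2},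 \] which for $\xi_{12}\xi_{23}\ne0$ equals $-\frac{\beta}{2}\big[\sqrt{|\xi_1a(\xi_1)+\xi_2a(\xi_2)|}-\sqrt{|\xi_3a(\xi_3)+\xi_4a(\xi_4)|}\big]^2/\big(2i\xi_{12}\xi_{23}\mathrm{sgn}(\xi_{12})\big)$. Define $E^a_0(f):=\sum_{\xi\in\mathbb{Z}}a(\xi)|\hat f(\xi)|^2=\|\sqrt{a(D)}f\|_{L^2}^2$ and \[ E^a_1(f):=\sum_{\substack{(\xi_1,\dots,\xi_4)\in\Gamma_4\cap\mathbb{Z}^4\\ \xi_{12}\xi_{23}\ne0}}b^a_4(\xi_1,\xi_2,\xi_3,\xi_4)\,\mathrm{sgn}(\xi_{12})\,\hat f(\xi_1)\hat{\bar f}(\xi_2)\hat f(\xi_3)\hat{\bar f}(\xi_4). \] *)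

theory Defs
  imports "HOL-Analysis.Analysis"
begin

definition jbr :: "real \<Rightarrow> real" where
  "jbr x = sqrt (1 + x\<^sup>2)"

definition smooth_fun :: "(real \<Rightarrow> real) \<Rightarrow> bool" where
  "smooth_fun a \<longleftrightarrow> (\<forall>n x. ((deriv ^^ n) a) differentiable (at x))"

text \<open>Condition (A), with all implicit constants bounded by one constant K.\<close>
definition condA :: "real \<Rightarrow> (real \<Rightarrow> real) \<Rightarrow> bool" where
  "condA K a \<longleftrightarrow>
     (\<forall>x. a x > 0) \<and>
     (\<forall>x. a (- x) = a x) \<and>
     mono_on {0..} a \<and>
     (\<forall>x\<in>{-1..1}. a x = a 0) \<and>
     (\<forall>x>0. a (2 * x) \<le> K * a x) \<and>
     (\<forall>k1 k2::nat. k1 > k2 \<longrightarrow>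
        a (2 ^ k1) / a (2 ^ k2) \<ge> (1 / K) * sqrt ((2 ^ k1) / (2 ^ k2))) \<and>
     (\<forall>j\<in>{1..5::nat}. \<forall>x. \<bar>(deriv ^^ j) a x\<bar> \<le> K * jbr x powr (- real j) * a x)"

definition qfun :: "(real \<Rightarrow> real) \<Rightarrow> real \<Rightarrow> real \<Rightarrow> real" where
  "qfun a x1 x2 = integral {0..1} (\<lambda>t. deriv (\<lambda>x. x * a x) (- x2 + (x1 + x2) * t))"

definition dqfun :: "(real \<Rightarrow> real) \<Rightarrow> real \<Rightarrow> real \<Rightarrow> real" where
  "dqfun a x1 x2 = deriv (\<lambda>s. qfun a s x2) x1 - deriv (\<lambda>s. qfun a x1 s) x2"

definition b4 :: "real \<Rightarrow> (real \<Rightarrow> real) \<Rightarrow> real \<Rightarrow> real \<Rightarrow> real \<Rightarrow> real \<Rightarrow> complex" where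
  "b4 \<beta> a x1 x2 x3 x4 =
     \<i> * complex_of_real (\<beta> * (x2 + x3) / 4 *
       (integral {0..1} (\<lambda>t. dqfun a (x1 + (x2 + x3) * t) (x2 - (x2 + x3) * t)))\<^sup>2
       / (sqrt (qfun a x1 x2) + sqrt (qfun a x3 x4))\<^sup>2)"

definition Gamma4 :: "(int \<times> int \<times> int \<times> int) set" where
  "Gamma4 = {(x1, x2, x3, x4). x1 + x2 + x3 + x4 = 0 \<and> (x1 + x2) * (x2 + x3) \<noteq> 0}"

text \<open>Fourier coefficients of the conjugate: hat(bar f)(xi) = conj(hat f(-xi)).\<close>
definition conj_hat :: "(int \<Rightarrow> complex) \<Rightarrow> int \<Rightarrow> complex" where
  "conj_hat fc \<xi> = cnj (fc (- \<xi>))"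

definition E1_summand :: "real \<Rightarrow> (real \<Rightarrow> real) \<Rightarrow> (int \<Rightarrow> complex) \<Rightarrow> int \<times> int \<times> int \<times> int \<Rightarrow> complex" where
  "E1_summand \<beta> a fc = (\<lambda>(x1, x2, x3, x4).
     b4 \<beta> a (of_int x1) (of_int x2) (of_int x3) (of_int x4) * of_int (sgn (x1 + x2))
       * fc x1 * conj_hat fc x2 * fc x3 * conj_hat fc x4)"

definition E1 :: "real \<Rightarrow> (real \<Rightarrow> real) \<Rightarrow> (int \<Rightarrow> complex) \<Rightarrow> complex" where
  "E1 \<beta> a fc = infsum (E1_summand \<beta> a fc) Gamma4"

definition E0 :: "(real \<Rightarrow> real) \<Rightarrow> (int \<Rightarrow> complex) \<Rightarrow> real" where
  "E0 a fc = infsum (\<lambda>\<xi>. a (of_int \<xi>) * (cmod (fc \<xi>))\<^sup>2) UNIV"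

text \<open>Squared L2 norm via Parseval (up to the normalising constant).\<close>
definition L2sq :: "(int \<Rightarrow> complex) \<Rightarrow> real" where
  "L2sq fc = infsum (\<lambda>\<xi>. (cmod (fc \<xi>))\<^sup>2) UNIV"

end

theory Submission
  imports Defs
begin

lemma MVT_sym:
  fixes f f' :: "real \<Rightarrow> real"
  assumes "\<And>x. DERIV f x :> f' x"
  shows "\<exists>w. min u v \<le> w \<and> w \<le> max u v \<and> f u - f v = (u - v) * f' w"
proof (cases "u = v")
  case True then show ?thesis by auto
next
  case False
  show ?thesis
  proof (cases "v < u")
    case True
    from MVT2[OF True assms] obtain z where "v < z" "z < u" "f u - f v = (u - v) * f' z" by blast
    then show ?thesis using True by (intro exI[of _ z]) auto
  next
    case F: False
    with False have "u < v" by auto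
    from MVT2[OF this assms] obtain z where "u < z" "z < v" "f v - f u = (v - u) * f' z" by blast
    then show ?thesis using \<open>u<v\<close> by (intro exI[of _ z]) (auto simp: algebra_simps)
  qed
qed

locale AC =
  fixes a :: "real \<Rightarrow> real" and K :: real
  assumes sm: "smooth_fun a" and cA: "condA K a"
begin

lemma apos: "a x > 0" using cA unfolding condA_def by auto
lemma aeven: "a (- x) = a x" using cA unfolding condA_def by auto
lemma amono0: "0 \<le> x \<Longrightarrow> x \<le> y \<Longrightarrow> a x \<le> a y"
  using cA unfolding condA_def mono_on_def by auto
lemma amono: "\<bar>x\<bar> \<le> \<bar>y\<bar> \<Longrightarrow> a x \<le> a y"
proof -
  assume h: "\<bar>x\<bar> \<le> \<bar>y\<bar>"
  have "a x = a \<bar>x\<bar>" "a y = a \<bar>y\<bar>" using aeven[of x] aeven[of y] by (auto simp: abs_if)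
  then show ?thesis using amono0[OF _ h] by simp
qed
lemma adbl: "x > 0 \<Longrightarrow> a (2 * x) \<le> K * a x" using cA unfolding condA_def by auto
lemma Kpos: "K > 0"
proof -
  have "a 2 \<le> K * a 1" using adbl[of 1] by simp
  moreover have "a 2 > 0" "a 1 > 0" using apos by auto
  ultimately show ?thesis
  proof -
    assume h: "a 2 \<le> K * a 1" "a 2 > 0" "a 1 > 0"
    show ?thesis
    proof (rule ccontr)
      assume "\<not> K > 0" then have "K * a 1 \<le> 0" using h(3) by (simp add: mult_nonpos_nonneg)
      then show False using h by linarith
    qed
  qed
qed
lemma a4: assumes "y > 0" shows "a (4 * y) \<le> K^2 * a y"
proof -
  have "a (4*y) = a (2 * (2*y))" by simp
  also have "\<dots> \<le> K * a (2*y)" using adbl[of "2*y"] assms by simp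
  also have "\<dots> \<le> K * (K * a y)" using adbl[OF assms] Kpos by (intro mult_left_mono) auto
  finally show ?thesis by (simp add: power2_eq_square)
qed
lemma aquarter: assumes "0 < M" "M \<le> 4 * \<bar>x\<bar>" shows "a M \<le> K^2 * a x"
proof -
  have "\<bar>x\<bar> > 0" using assms by auto
  have "a M \<le> a (4 * \<bar>x\<bar>)" using assms by (intro amono) auto
  also have "\<dots> \<le> K^2 * a \<bar>x\<bar>" using a4 \<open>\<bar>x\<bar> > 0\<close> by auto
  also have "a \<bar>x\<bar> = a x" using aeven[of x] by (auto simp: abs_if)
  finally show ?thesis .
qed

lemma a_der: "DERIV a x :> deriv a x"
proof -
  have "((deriv ^^ 0) a) differentiable (at x)" using sm unfolding smooth_fun_def by blast
  then show ?thesis by (simp add: DERIV_deriv_iff_real_differentiable)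
qed
lemma a'_der: "DERIV (deriv a) x :> deriv (deriv a) x"
proof -
  have "((deriv ^^ 1) a) differentiable (at x)" using sm unfolding smooth_fun_def by blast
  then show ?thesis by (simp add: DERIV_deriv_iff_real_differentiable)
qed

lemma jbr_pos: "jbr x > 0" unfolding jbr_def by (simp add: add_pos_nonneg)
lemma jbr_ge: "\<bar>x\<bar> \<le> jbr x" unfolding jbr_def by (simp add: real_le_rsqrt)
lemma jbr_ge1: "1 \<le> jbr x" unfolding jbr_def by simp

lemma a'_bd: "\<bar>deriv a x\<bar> \<le> K * a x / jbr x"
proof -
  have "\<forall>j\<in>{1..5::nat}. \<forall>x. \<bar>(deriv ^^ j) a x\<bar> \<le> K * jbr x powr (- real j) * a x"
    using cA unfolding condA_def by blast
  then have "\<bar>(deriv ^^ 1) a x\<bar> \<le> K * jbr x powr (- real 1) * a x" by (drule_tac x=1 in bspec) auto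
  moreover have "jbr x powr (- real 1) = 1 / jbr x" using jbr_pos[of x] by (simp add: powr_minus divide_simps)
  ultimately show ?thesis by simp
qed
lemma a''_bd: "\<bar>deriv (deriv a) x\<bar> \<le> K * a x / (jbr x)^2"
proof -
  have "\<forall>j\<in>{1..5::nat}. \<forall>x. \<bar>(deriv ^^ j) a x\<bar> \<le> K * jbr x powr (- real j) * a x"
    using cA unfolding condA_def by blast
  then have "\<bar>(deriv ^^ 2) a x\<bar> \<le> K * jbr x powr (- real 2) * a x" by (drule_tac x=2 in bspec) auto
  moreover have "(deriv ^^ 2) a = deriv (deriv a)" by (simp add: numeral_2_eq_2)
  moreover have "jbr x powr (- real 2) = 1 / (jbr x)^2" using jbr_pos[of x]
    by (simp add: powr_minus powr_realpow divide_simps)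
  ultimately show ?thesis by simp
qed

definition g :: "real \<Rightarrow> real" where "g x = x * a x"
definition g1 :: "real \<Rightarrow> real" where "g1 x = a x + x * deriv a x"
definition g2 :: "real \<Rightarrow> real" where "g2 x = 2 * deriv a x + x * deriv (deriv a) x"

lemma g_der: "DERIV g x :> g1 x"
  unfolding g_def g1_def by (auto intro!: derivative_eq_intros a_der)
lemma g1_der: "DERIV g1 x :> g2 x"
  unfolding g1_def g2_def by (auto intro!: derivative_eq_intros a_der a'_der)
lemma g_odd: "g (- x) = - g x" unfolding g_def using aeven by simp

lemma g1_bd: "\<bar>g1 x\<bar> \<le> (1 + K) * a x"
proof -
  have "\<bar>x * deriv a x\<bar> \<le> \<bar>x\<bar> * (K * a x / jbr x)" unfolding abs_mult
    by (intro mult_left_mono a'_bd) auto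
  also have "\<dots> = (\<bar>x\<bar> / jbr x) * (K * a x)" by simp
  also have "\<dots> \<le> 1 * (K * a x)" using jbr_ge[of x] jbr_pos[of x] Kpos apos[of x]
    by (intro mult_right_mono) (auto simp: divide_simps)
  finally show ?thesis unfolding g1_def using apos[of x] by (simp add: algebra_simps)
qed

lemma g2_bd: "\<bar>g2 x\<bar> \<le> 3 * K * a x / jbr x"
proof -
  have 1: "\<bar>2 * deriv a x\<bar> \<le> 2 * (K * a x / jbr x)" using a'_bd[of x] by simp
  have "\<bar>x * deriv (deriv a) x\<bar> \<le> \<bar>x\<bar> * (K * a x / (jbr x)^2)" unfolding abs_mult
    by (intro mult_left_mono a''_bd) auto
  also have "\<dots> = (\<bar>x\<bar> / jbr x) * (K * a x / jbr x)" by (simp add: power2_eq_square)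
  also have "\<dots> \<le> 1 * (K * a x / jbr x)" using jbr_ge[of x] jbr_pos[of x] Kpos apos[of x]
    by (intro mult_right_mono) (auto simp: divide_simps)
  finally have 2: "\<bar>x * deriv (deriv a) x\<bar> \<le> K * a x / jbr x" by simp
  have "\<bar>g2 x\<bar> \<le> \<bar>2 * deriv a x\<bar> + \<bar>x * deriv (deriv a) x\<bar>" unfolding g2_def by (rule abs_triangle_ineq)
  also have "\<dots> \<le> 2 * (K * a x / jbr x) + K * a x / jbr x" using 1 2 by linarith
  finally show ?thesis by simp
qed

end

context AC begin

lemma deriv_xa: "deriv (\<lambda>x. x * a x) y = g1 y"
proof -
  have "(\<lambda>x. x * a x) = g" unfolding g_def by auto
  then show ?thesis using g_der[of y] by (simp add: DERIV_imp_deriv)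
qed

lemma ftc01:
  fixes F f :: "real \<Rightarrow> real"
  assumes "\<And>t. (F has_real_derivative f t) (at t)"
  shows "integral {0..1} f = F 1 - F 0"
proof -
  have "(f has_integral (F 1 - F 0)) {0..1}"
    by (rule fundamental_theorem_of_calculus[where f=F])
       (auto intro!: assms[THEN has_field_derivative_at_within, unfolded has_real_derivative_iff_has_vector_derivative])
  then show ?thesis by (rule integral_unique)
qed

lemma qfun_closed:
  assumes "x1 + x2 \<noteq> 0"
  shows "qfun a x1 x2 = (g x1 + g x2) / (x1 + x2)"
proof -
  define s where "s = x1 + x2"
  have s0: "s \<noteq> 0" using assms s_def by simp
  have d: "((\<lambda>t. g (- x2 + s * t) / s) has_real_derivative g1 (- x2 + s * t)) (at t)" for t
  proof -
    have "((\<lambda>t. g (- x2 + s * t)) has_real_derivative g1 (- x2 + s * t) * s) (at t)"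
      by (rule DERIV_chain2[OF g_der]) (auto intro!: derivative_eq_intros)
    from DERIV_cdivide[OF this, of s] show ?thesis using s0 by simp
  qed
  have "integral {0..1} (\<lambda>t. g1 (- x2 + s * t)) = g (- x2 + s * 1) / s - g (- x2 + s * 0) / s"
    by (rule ftc01[OF d])
  then have "integral {0..1} (\<lambda>t. g1 (- x2 + s * t)) = g x1 / s - g (- x2) / s"
    by (simp add: s_def)
  moreover have "(\<lambda>t. deriv (\<lambda>x. x * a x) (- x2 + (x1 + x2) * t)) = (\<lambda>t. g1 (- x2 + s * t))"
    by (auto simp: deriv_xa s_def)
  ultimately show ?thesis unfolding qfun_def s_def[symmetric] using g_odd[of x2]
    by (simp add: diff_divide_distrib add_divide_distrib)
qed

lemma dq_closed:
  assumes "y1 + y2 \<noteq> 0"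
  shows "dqfun a y1 y2 = (g1 y1 - g1 y2) / (y1 + y2)"
proof -
  have d1: "((\<lambda>z. (g z + g y2) / (z + y2)) has_real_derivative
          (g1 y1 * (y1 + y2) - (g y1 + g y2) * 1) / (y1 + y2)^2) (at y1)"
    using assms by (auto intro!: derivative_eq_intros g_der simp: power2_eq_square)
  have e1: "deriv (\<lambda>z. qfun a z y2) y1 = (g1 y1 * (y1 + y2) - (g y1 + g y2) * 1) / (y1 + y2)^2"
  proof (rule DERIV_imp_deriv, rule has_field_derivative_transform_within_open[OF d1, of "{z. z + y2 \<noteq> 0}"])
    show "open {z. z + y2 \<noteq> 0}" by (auto intro!: open_Collect_neq continuous_intros)
  qed (use assms qfun_closed in auto)
  have d2: "((\<lambda>z. (g y1 + g z) / (y1 + z)) has_real_derivative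
          (g1 y2 * (y1 + y2) - (g y1 + g y2) * 1) / (y1 + y2)^2) (at y2)"
    using assms by (auto intro!: derivative_eq_intros g_der simp: power2_eq_square)
  have e2: "deriv (\<lambda>z. qfun a y1 z) y2 = (g1 y2 * (y1 + y2) - (g y1 + g y2) * 1) / (y1 + y2)^2"
  proof (rule DERIV_imp_deriv, rule has_field_derivative_transform_within_open[OF d2, of "{z. y1 + z \<noteq> 0}"])
    show "open {z. y1 + z \<noteq> 0}" by (auto intro!: open_Collect_neq continuous_intros)
  qed (use assms qfun_closed in auto)
  show ?thesis unfolding dqfun_def e1 e2 using assms
    by (simp add: power2_eq_square divide_simps) (simp add: algebra_simps)
qed

lemma dq_int:
  assumes "x1 + x2 + x3 + x4 = 0" "x1 + x2 \<noteq> 0" "x2 + x3 \<noteq> 0"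
  shows "integral {0..1} (\<lambda>t. dqfun a (x1 + (x2 + x3) * t) (x2 - (x2 + x3) * t))
       = - (g x1 + g x2 + g x3 + g x4) / ((x2 + x3) * (x1 + x2))"
proof -
  define s m where "s = x1 + x2" and "m = x2 + x3"
  have s0: "s \<noteq> 0" and m0: "m \<noteq> 0" using assms s_def m_def by auto
  have eq: "(\<lambda>t. dqfun a (x1 + m * t) (x2 - m * t)) = (\<lambda>t. (g1 (x1 + m * t) - g1 (x2 - m * t)) / s)"
    using s0 by (auto simp: dq_closed s_def algebra_simps)
  have d: "((\<lambda>t. (g (x1 + m * t) + g (x2 - m * t)) / (m * s)) has_real_derivative
            (g1 (x1 + m * t) - g1 (x2 - m * t)) / s) (at t)" for t
  proof -
    have a1: "((\<lambda>t. g (x1 + m * t)) has_real_derivative g1 (x1 + m * t) * m) (at t)"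
      by (rule DERIV_chain2[OF g_der]) (auto intro!: derivative_eq_intros)
    have a2: "((\<lambda>t. g (x2 - m * t)) has_real_derivative g1 (x2 - m * t) * (- m)) (at t)"
      by (rule DERIV_chain2[OF g_der]) (auto intro!: derivative_eq_intros)
    show ?thesis using DERIV_cdivide[OF DERIV_add[OF a1 a2], of "m * s"]
      by (rule DERIV_cong) (use s0 m0 in \<open>simp add: divide_simps algebra_simps\<close>)
  qed
  have "integral {0..1} (\<lambda>t. (g1 (x1 + m * t) - g1 (x2 - m * t)) / s) =
     (g (x1 + m * 1) + g (x2 - m * 1)) / (m * s) - (g (x1 + m * 0) + g (x2 - m * 0)) / (m * s)"
    by (rule ftc01[OF d])
  then have "integral {0..1} (\<lambda>t. dqfun a (x1 + m * t) (x2 - m * t)) =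
     (g (x1 + m) + g (x2 - m)) / (m * s) - (g x1 + g x2) / (m * s)"
    unfolding eq by simp
  moreover have "x1 + m = - x4" "x2 - m = - x3" using assms(1) m_def by auto
  ultimately show ?thesis unfolding s_def m_def using g_odd[of x4] g_odd[of x3]
    by (simp add: diff_divide_distrib[symmetric])
qed

end

context AC begin

lemma quot_lb_aux:
  assumes "v < u"
  shows "(u - v) * (a (max \<bar>u\<bar> \<bar>v\<bar>) / 2) \<le> g u - g v"
proof -
  have au: "a u > 0" and av: "a v > 0" using apos by auto
  show ?thesis
  proof (cases "0 \<le> v")
    case True
    have "a v \<le> a u" using True assms by (intro amono) auto
    then have "v * a v \<le> v * a u" using True by (intro mult_left_mono) auto
    moreover have "max \<bar>u\<bar> \<bar>v\<bar> = u" using True assms by auto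
    moreover have "(u - v) * (a u / 2) \<le> (u - v) * a u" using au assms by simp
    moreover have "(u - v) * a u = u * a u - v * a u" by (simp add: algebra_simps)
    ultimately show ?thesis unfolding g_def by simp
  next
    case F: False
    show ?thesis
    proof (cases "u \<le> 0")
      case True
      have "a u \<le> a v" using True assms by (intro amono) auto
      then have "u * a v \<le> u * a u" using True by (intro mult_left_mono_neg) auto
      moreover have "max \<bar>u\<bar> \<bar>v\<bar> = - v" using True assms by auto
      moreover have "(u - v) * (a v / 2) \<le> (u - v) * a v" using av assms by simp
      moreover have "(u - v) * a v = u * a v - v * a v" by (simp add: algebra_simps)
      moreover have "a (- v) = a v" by (rule aeven)
      ultimately show ?thesis unfolding g_def by simp
    next
      case False
      then have u0: "u > 0" and v0: "v < 0" using F by auto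
      show ?thesis
      proof (cases "u \<ge> - v")
        case True
        then have m: "max \<bar>u\<bar> \<bar>v\<bar> = u" using u0 v0 by auto
        have "0 \<le> (u + v) * a u" using True au by simp
        then have "(u - v) * (a u / 2) \<le> u * a u" by (simp add: field_simps)
        moreover have "- v * a v \<ge> 0" using v0 av by (simp add: mult_nonpos_nonneg)
        ultimately have "(u - v) * (a u / 2) \<le> u * a u - v * a v" by linarith
        then show ?thesis unfolding g_def m by simp
      next
        case False
        then have m: "max \<bar>u\<bar> \<bar>v\<bar> = - v" using u0 v0 by auto
        have "u * a v \<le> (- v) * a v" using False av by (intro mult_right_mono) auto
        then have "(u - v) * (a (- v) / 2) \<le> - v * a v" using aeven[of v] by (simp add: field_simps)
        moreover have "u * a u \<ge> 0" using u0 au by simp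
        ultimately have "(u - v) * (a (- v) / 2) \<le> u * a u - v * a v" by linarith
        then show ?thesis unfolding g_def m by simp
      qed
    qed
  qed
qed

lemma quot_lb:
  assumes "u \<noteq> v"
  shows "a (max \<bar>u\<bar> \<bar>v\<bar>) / 2 \<le> (g u - g v) / (u - v)"
proof (cases "v < u")
  case True
  from quot_lb_aux[OF True] True show ?thesis by (simp add: field_simps)
next
  case False
  then have "u < v" using assms by auto
  from quot_lb_aux[OF this] this show ?thesis by (simp add: field_simps max.commute)
qed

lemma quot_ub:
  assumes "u \<noteq> v"
  shows "\<bar>(g u - g v) / (u - v)\<bar> \<le> (1 + K) * a (max \<bar>u\<bar> \<bar>v\<bar>)"
proof -
  obtain w where w: "min u v \<le> w" "w \<le> max u v" "g u - g v = (u - v) * g1 w"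
    using MVT_sym[OF g_der] by blast
  have q: "(g u - g v) / (u - v) = g1 w" using w(3) assms by simp
  have "\<bar>w\<bar> \<le> \<bar>max \<bar>u\<bar> \<bar>v\<bar>\<bar>" using w by auto
  then have "a w \<le> a (max \<bar>u\<bar> \<bar>v\<bar>)" by (rule amono)
  then have "(1 + K) * a w \<le> (1 + K) * a (max \<bar>u\<bar> \<bar>v\<bar>)" using Kpos by simp
  then show ?thesis using q g1_bd[of w] by simp
qed

lemma minmax_lem: "min y z \<le> (w::real) \<Longrightarrow> w \<le> max y z \<Longrightarrow> 2 * \<bar>y - z\<bar> < max \<bar>y\<bar> \<bar>z\<bar> \<Longrightarrow> max \<bar>y\<bar> \<bar>z\<bar> \<le> 2 * \<bar>w\<bar>"
  by (cases "0 \<le> y"; cases "0 \<le> z"; cases "0 \<le> w"; simp add: min_def max_def split: if_splits)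

definition C3 :: real where "C3 = 4 + 10 * K"

lemma g1diff:
  assumes R: "R = max \<bar>y\<bar> \<bar>y - s\<bar>" "R > 0"
  shows "\<bar>g1 y - g1 (y - s)\<bar> \<le> C3 * a R * \<bar>s\<bar> / R"
proof (cases "\<bar>s\<bar> * 2 \<ge> R")
  case True
  have "a y \<le> a R" "a (y - s) \<le> a R" using R by (auto intro!: amono)
  then have "(1 + K) * a y \<le> (1 + K) * a R" "(1 + K) * a (y - s) \<le> (1 + K) * a R"
    using Kpos by (auto intro!: mult_left_mono)
  then have "\<bar>g1 y\<bar> \<le> (1 + K) * a R" "\<bar>g1 (y - s)\<bar> \<le> (1 + K) * a R"
    using g1_bd[of y] g1_bd[of "y - s"] by linarith+
  then have "\<bar>g1 y - g1 (y - s)\<bar> \<le> 2 * (1 + K) * a R" by linarith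
  also have "\<dots> \<le> 4 * (1 + K) * a R * \<bar>s\<bar> / R"
  proof -
    have "2 * (1 + K) * a R * R \<le> 2 * (1 + K) * a R * (2 * \<bar>s\<bar>)"
      using True Kpos apos[of R] by (intro mult_left_mono) auto
    then show ?thesis using R by (simp add: field_simps)
  qed
  also have "\<dots> \<le> C3 * a R * \<bar>s\<bar> / R" unfolding C3_def using Kpos apos[of R] R
    by (intro divide_right_mono mult_right_mono) auto
  finally show ?thesis .
next
  case False
  obtain w where w: "min y (y - s) \<le> w" "w \<le> max y (y - s)" "g1 y - g1 (y - s) = (y - (y - s)) * g2 w"
    using MVT_sym[OF g1_der] by blast
  have wR: "\<bar>w\<bar> \<le> R" using w R by (simp add: min_def max_def abs_if split: if_splits)
  have "2 * \<bar>s\<bar> < R" using False by simp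
  then have wR2: "R \<le> 2 * \<bar>w\<bar>" using w R minmax_lem[of y "y - s" w] by simp
  have "\<bar>g2 w\<bar> \<le> 3 * K * a w / jbr w" by (rule g2_bd)
  also have "\<dots> \<le> 3 * K * a R / (R / 2)"
  proof (rule frac_le)
    show "0 \<le> 3 * K * a R" using Kpos apos[of R] by simp
    show "3 * K * a w \<le> 3 * K * a R" using Kpos amono[of w R] wR R by simp
    show "0 < R / 2" using R by simp
    show "R / 2 \<le> jbr w" using jbr_ge[of w] wR2 by simp
  qed
  finally have "\<bar>g2 w\<bar> \<le> 6 * K * a R / R" by simp
  then have "\<bar>s\<bar> * \<bar>g2 w\<bar> \<le> \<bar>s\<bar> * (6 * K * a R / R)" by (rule mult_left_mono) auto
  then have "\<bar>g1 y - g1 (y - s)\<bar> \<le> \<bar>s\<bar> * (6 * K * a R / R)" using w(3)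
    by (simp add: abs_mult)
  also have "\<dots> \<le> C3 * a R * \<bar>s\<bar> / R" unfolding C3_def using Kpos apos[of R] R
    by (simp add: field_simps mult_right_mono)
  finally show ?thesis .
qed

end

context AC begin

lemma alg1: "(m::real) \<noteq> 0 \<Longrightarrow> \<beta> * m / 4 * (- D / m)^2 / Q = \<beta> * D^2 / (4 * m * Q)"
  by (cases "Q = 0") (simp_all add: power2_eq_square field_simps)

lemma cmod_i_real: "cmod (\<i> * complex_of_real r) = \<bar>r\<bar>"
  by (simp add: norm_mult)

lemma b4_formula:
  assumes "x1 + x2 + x3 + x4 = 0" "x1 + x2 \<noteq> 0" "x2 + x3 \<noteq> 0"
  defines "A \<equiv> qfun a x1 x2" and "B \<equiv> qfun a x3 x4"
  shows "cmod (b4 \<beta> a x1 x2 x3 x4) = \<bar>\<beta>\<bar> * (A - B)^2 / (4 * \<bar>x2 + x3\<bar> * (sqrt A + sqrt B)^2)"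
proof -
  define s m where "s = x1 + x2" and "m = x2 + x3"
  have s0: "s \<noteq> 0" and m0: "m \<noteq> 0" using assms s_def m_def by auto
  have A: "A = (g x1 + g x2) / s" unfolding A_def s_def using assms qfun_closed by simp
  have e34: "x3 + x4 = - s" using assms(1) s_def by linarith
  have B: "B = - (g x3 + g x4) / s"
  proof -
    have "x3 + x4 \<noteq> 0" using e34 s0 by simp
    then have "B = (g x3 + g x4) / (x3 + x4)" unfolding B_def by (rule qfun_closed)
    then show ?thesis unfolding e34 by (simp only: divide_minus_right minus_divide_left)
  qed
  have I0: "integral {0..1} (\<lambda>t. dqfun a (x1 + (x2 + x3) * t) (x2 - (x2 + x3) * t))
       = - (g x1 + g x2 + g x3 + g x4) / (m * s)" using dq_int[OF assms(1-3)] unfolding s_def m_def .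
  have "- (g x1 + g x2 + g x3 + g x4) / (m * s) = - (A - B) / m" unfolding A B using s0 m0
    by (simp add: field_simps)
  with I0 have I: "integral {0..1} (\<lambda>t. dqfun a (x1 + (x2 + x3) * t) (x2 - (x2 + x3) * t)) = - (A - B) / m"
    by simp
  have "b4 \<beta> a x1 x2 x3 x4 = \<i> * complex_of_real (\<beta> * m / 4 * (- (A - B) / m)^2 / (sqrt A + sqrt B)^2)"
    unfolding b4_def I A_def[symmetric] B_def[symmetric] m_def by simp
  also have "\<beta> * m / 4 * (- (A - B) / m)^2 / (sqrt A + sqrt B)^2 = \<beta> * (A - B)^2 / (4 * m * (sqrt A + sqrt B)^2)"
    using m0 by (rule alg1)
  finally have "cmod (b4 \<beta> a x1 x2 x3 x4) = \<bar>\<beta> * (A - B)^2 / (4 * m * (sqrt A + sqrt B)^2)\<bar>"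
    by (simp only: cmod_i_real)
  also have "\<dots> = \<bar>\<beta>\<bar> * (A - B)^2 / (4 * \<bar>m\<bar> * (sqrt A + sqrt B)^2)"
    by (simp add: abs_mult)
  finally show ?thesis unfolding m_def .
qed

lemma A_lb:
  assumes "x1 + x2 \<noteq> 0"
  shows "a (max \<bar>x1\<bar> \<bar>x2\<bar>) / 2 \<le> qfun a x1 x2"
proof -
  have "qfun a x1 x2 = (g x1 - g (- x2)) / (x1 - (- x2))" using qfun_closed[OF assms] g_odd[of x2] by simp
  moreover have "a (max \<bar>x1\<bar> \<bar>- x2\<bar>) / 2 \<le> (g x1 - g (- x2)) / (x1 - (- x2))"
    using assms by (intro quot_lb) auto
  ultimately show ?thesis by simp
qed

lemma A_ub:
  assumes "x1 + x2 \<noteq> 0" "\<bar>x1\<bar> \<le> M" "\<bar>x2\<bar> \<le> M"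
  shows "qfun a x1 x2 \<le> (1 + K) * a M"
proof -
  have "qfun a x1 x2 = (g x1 - g (- x2)) / (x1 - (- x2))" using qfun_closed[OF assms(1)] g_odd[of x2] by simp
  moreover have "\<bar>(g x1 - g (- x2)) / (x1 - (- x2))\<bar> \<le> (1 + K) * a (max \<bar>x1\<bar> \<bar>- x2\<bar>)"
    using assms by (intro quot_ub) auto
  moreover have "a (max \<bar>x1\<bar> \<bar>- x2\<bar>) \<le> a M" using assms by (intro amono) auto
  moreover have "(1 + K) * a (max \<bar>x1\<bar> \<bar>- x2\<bar>) \<le> (1 + K) * a M"
    using Kpos calculation(3) by (intro mult_left_mono) auto
  ultimately show ?thesis by linarith
qed

definition Cb :: "real \<Rightarrow> real" where "Cb \<beta> = \<bar>\<beta>\<bar> * (C3^2 + 2 * (1 + K))"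

lemma between_abs: "min p q \<le> (w::real) \<Longrightarrow> w \<le> max p q \<Longrightarrow> \<bar>w\<bar> \<le> max \<bar>p\<bar> \<bar>q\<bar>"
  by (cases "p \<le> q") (auto simp: min_def max_def)
lemma between_diff: "min p (p + m) \<le> (w::real) \<Longrightarrow> w \<le> max p (p + m) \<Longrightarrow> \<bar>w - p\<bar> \<le> \<bar>m\<bar>"
  by (cases "0 \<le> m") (auto simp: min_def max_def)

lemma R_bounds:
  fixes x1 x2 x3 x4 m s w M :: real
  assumes "x1 + x2 + x3 + x4 = 0" "s = x1 + x2" "m = x2 + x3"
    "M = max (max \<bar>x1\<bar> \<bar>x2\<bar>) (max \<bar>x3\<bar> \<bar>x4\<bar>)"
    "min x1 (x1 + m) \<le> w" "w \<le> max x1 (x1 + m)" "4 * \<bar>m\<bar> \<le> M"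
  shows "\<bar>w\<bar> \<le> M" "\<bar>w - s\<bar> \<le> M" "M \<le> 2 * max \<bar>w\<bar> \<bar>w - s\<bar>"
proof -
  have x4: "x4 = - x1 - m" and x3: "x3 = m - x2" using assms(1,3) by linarith+
  have wm: "\<bar>w - x1\<bar> \<le> \<bar>m\<bar>" using assms(5,6) by (rule between_diff)
  have M1: "\<bar>x1\<bar> \<le> M" "\<bar>x2\<bar> \<le> M" "\<bar>x3\<bar> \<le> M" "\<bar>x4\<bar> \<le> M" unfolding assms(4) by (simp_all add: le_max_iff_disj)
  have "\<bar>w\<bar> \<le> max \<bar>x1\<bar> \<bar>x1 + m\<bar>" using assms(5,6) by (rule between_abs)
  moreover have "\<bar>x1 + m\<bar> = \<bar>x4\<bar>" using x4 by simp
  ultimately have "\<bar>w\<bar> \<le> max \<bar>x1\<bar> \<bar>x4\<bar>" by simp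
  then show "\<bar>w\<bar> \<le> M" using M1 by (simp add: max_def split: if_splits)
  have "w - s - (- x2) = w - x1" using assms(2) by simp
  then have "\<bar>w - s - (- x2)\<bar> \<le> \<bar>m\<bar>" using wm by simp
  have "\<bar>w - s\<bar> \<le> max \<bar>- x2\<bar> \<bar>x3\<bar>"
  proof (rule between_abs)
    show "min (- x2) x3 \<le> w - s" "w - s \<le> max (- x2) x3"
      using assms(2,5,6) x3 by (simp_all add: min_def max_def split: if_splits)
  qed
  then show "\<bar>w - s\<bar> \<le> M" using M1 by simp
  have "\<bar>x3\<bar> \<le> \<bar>x2\<bar> + \<bar>m\<bar>" "\<bar>x4\<bar> \<le> \<bar>x1\<bar> + \<bar>m\<bar>" using x3 x4 by auto
  then have "\<bar>x3\<bar> \<le> max \<bar>x1\<bar> \<bar>x2\<bar> + \<bar>m\<bar>" "\<bar>x4\<bar> \<le> max \<bar>x1\<bar> \<bar>x2\<bar> + \<bar>m\<bar>"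
    by (auto simp: max_def)
  then have "M \<le> max \<bar>x1\<bar> \<bar>x2\<bar> + \<bar>m\<bar>" unfolding assms(4) by (auto simp: max_def)
  moreover have "\<bar>x1\<bar> \<le> \<bar>w\<bar> + \<bar>m\<bar>" "\<bar>x2\<bar> \<le> \<bar>w - s\<bar> + \<bar>m\<bar>" using wm assms(2) by auto
  moreover have "\<bar>w\<bar> \<le> max \<bar>w\<bar> \<bar>w - s\<bar>" "\<bar>w - s\<bar> \<le> max \<bar>w\<bar> \<bar>w - s\<bar>" by auto
  ultimately show "M \<le> 2 * max \<bar>w\<bar> \<bar>w - s\<bar>" using assms(7) by (simp add: max_def split: if_splits)
qed

lemma AB_closed:
  assumes "x1 + x2 + x3 + x4 = 0" "x1 + x2 \<noteq> 0"
  shows "qfun a x1 x2 = (g x1 + g x2) / (x1 + x2)" "qfun a x3 x4 = - (g x3 + g x4) / (x1 + x2)"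
proof -
  show "qfun a x1 x2 = (g x1 + g x2) / (x1 + x2)" using qfun_closed[OF assms(2)] .
  have e34: "x3 + x4 = - (x1 + x2)" using assms(1) by linarith
  have "x3 + x4 \<noteq> 0" using e34 assms(2) by simp
  then have "qfun a x3 x4 = (g x3 + g x4) / (x3 + x4)" by (rule qfun_closed)
  then show "qfun a x3 x4 = - (g x3 + g x4) / (x1 + x2)" unfolding e34 by (simp only: divide_minus_right minus_divide_left)
qed

lemma b4_bound:
  assumes "x1 + x2 + x3 + x4 = 0" "x1 + x2 \<noteq> 0" "x2 + x3 \<noteq> 0"
  defines "M \<equiv> max (max \<bar>x1\<bar> \<bar>x2\<bar>) (max \<bar>x3\<bar> \<bar>x4\<bar>)"
  shows "cmod (b4 \<beta> a x1 x2 x3 x4) \<le> Cb \<beta> * a M / M"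
proof -
  define A B s m where "A = qfun a x1 x2" and "B = qfun a x3 x4" and "s = x1 + x2" and "m = x2 + x3"
  have s0: "s \<noteq> 0" and m0: "m \<noteq> 0" using assms s_def m_def by auto
  have s34: "x3 + x4 \<noteq> 0" using assms by auto
  have Mpos: "M > 0" using assms(2) unfolding M_def by auto
  have aMpos: "a M > 0" by (rule apos)
  have K0: "K > 0" by (rule Kpos)
  have C30: "C3 \<ge> 0" unfolding C3_def using K0 by simp
  have cm: "cmod (b4 \<beta> a x1 x2 x3 x4) = \<bar>\<beta>\<bar> * (A - B)^2 / (4 * \<bar>m\<bar> * (sqrt A + sqrt B)^2)"
    unfolding A_def B_def m_def using b4_formula[OF assms(1-3)] by simp
  have Alb: "a (max \<bar>x1\<bar> \<bar>x2\<bar>) / 2 \<le> A" unfolding A_def using assms(2) by (rule A_lb)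
  have Blb: "a (max \<bar>x3\<bar> \<bar>x4\<bar>) / 2 \<le> B" unfolding B_def using s34 by (rule A_lb)
  have Apos: "A > 0" using Alb apos[of "max \<bar>x1\<bar> \<bar>x2\<bar>"] by linarith
  have Bpos: "B > 0" using Blb apos[of "max \<bar>x3\<bar> \<bar>x4\<bar>"] by linarith
  have P_lb: "a M / 2 \<le> A + B"
  proof (cases "max \<bar>x1\<bar> \<bar>x2\<bar> \<le> max \<bar>x3\<bar> \<bar>x4\<bar>")
    case True then have "M = max \<bar>x3\<bar> \<bar>x4\<bar>" unfolding M_def by (rule max.absorb2)
    then show ?thesis using Blb Apos by simp
  next
    case False then have "max \<bar>x3\<bar> \<bar>x4\<bar> \<le> max \<bar>x1\<bar> \<bar>x2\<bar>" by linarith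
    then have "M = max \<bar>x1\<bar> \<bar>x2\<bar>" unfolding M_def by (rule max.absorb1)
    then show ?thesis using Alb Bpos by simp
  qed
  have Aub: "A \<le> (1 + K) * a M" unfolding A_def using assms(2) by (rule A_ub) (auto simp: M_def le_max_iff_disj)
  have Bub: "B \<le> (1 + K) * a M" unfolding B_def using s34 by (rule A_ub) (auto simp: M_def le_max_iff_disj)
  have sq: "A + B \<le> (sqrt A + sqrt B)^2"
    using Apos Bpos by (simp add: power2_eq_square algebra_simps)
  have P0: "A + B > 0" using Apos Bpos by simp
  have cm2: "cmod (b4 \<beta> a x1 x2 x3 x4) \<le> \<bar>\<beta>\<bar> * ((A - B)^2 / (A + B)) / (4 * \<bar>m\<bar>)"
  proof -
    have "\<bar>\<beta>\<bar> * (A - B)^2 / (4 * \<bar>m\<bar> * (sqrt A + sqrt B)^2) \<le> \<bar>\<beta>\<bar> * (A - B)^2 / (4 * \<bar>m\<bar> * (A + B))"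
    proof (intro divide_left_mono mult_left_mono)
      have "sqrt A + sqrt B > 0" using Apos Bpos by (simp add: add_pos_pos)
      then have "(sqrt A + sqrt B)^2 > 0" by simp
      then show "0 < 4 * \<bar>m\<bar> * (sqrt A + sqrt B)\<^sup>2 * (4 * \<bar>m\<bar> * (A + B))" using P0 m0 by simp
    qed (use sq in auto)
    then show ?thesis using cm by (simp add: field_simps)
  qed
  show ?thesis
  proof (cases "4 * \<bar>m\<bar> \<le> M")
    case False
    have "(A - B)^2 \<le> (A + B)^2" using Apos Bpos by (simp add: power2_eq_square algebra_simps)
    then have "(A - B)^2 / (A + B) \<le> A + B" using P0 by (simp add: power2_eq_square divide_simps)
    also have "\<dots> \<le> 2 * (1 + K) * a M" using Aub Bub by (simp add: algebra_simps)
    finally have q: "(A - B)^2 / (A + B) \<le> 2 * (1 + K) * a M" .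
    have "\<bar>\<beta>\<bar> * ((A - B)^2 / (A + B)) / (4 * \<bar>m\<bar>) \<le> \<bar>\<beta>\<bar> * (2 * (1 + K) * a M) / (4 * \<bar>m\<bar>)"
      using q by (intro divide_right_mono mult_left_mono) auto
    then have "cmod (b4 \<beta> a x1 x2 x3 x4) \<le> \<bar>\<beta>\<bar> * (2 * (1 + K) * a M) / (4 * \<bar>m\<bar>)"
      using cm2 by linarith
    also have "\<dots> \<le> \<bar>\<beta>\<bar> * (2 * (1 + K) * a M) / M"
      using False Mpos K0 aMpos by (intro divide_left_mono) auto
    also have "\<dots> \<le> Cb \<beta> * a M / M" unfolding Cb_def
      using Mpos K0 aMpos by (intro divide_right_mono) (auto simp: algebra_simps mult_left_mono)
    finally show ?thesis .
  next
    case True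
    define h where "h y = g y - g (y - s)" for y
    have hd: "DERIV h y :> g1 y - g1 (y - s)" for y
      unfolding h_def by (auto intro!: derivative_eq_intros g_der DERIV_chain2[OF g_der])
    obtain w where w: "min x1 (x1 + m) \<le> w" "w \<le> max x1 (x1 + m)"
      "h x1 - h (x1 + m) = (x1 - (x1 + m)) * (g1 w - g1 (w - s))"
      using MVT_sym[OF hd] by blast
    have hx: "h x1 - h (x1 + m) = s * (A - B)"
    proof -
      have "x1 - s = - x2" "x1 + m = - x4" "x1 + m - s = x3" using assms(1) s_def m_def by auto
      then have "h x1 - h (x1 + m) = g x1 + g x2 + g x3 + g x4" unfolding h_def using g_odd by simp
      moreover have "A = (g x1 + g x2) / s" "B = - (g x3 + g x4) / s"
        using AB_closed[OF assms(1,2)] A_def B_def s_def by auto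
      ultimately show ?thesis using s0 by (simp add: field_simps)
    qed
    define R where "R = max \<bar>w\<bar> \<bar>w - s\<bar>"
    have Rb: "\<bar>w\<bar> \<le> M" "\<bar>w - s\<bar> \<le> M" "M \<le> 2 * R"
      using R_bounds[OF assms(1) s_def m_def M_def[THEN meta_eq_to_obj_eq] w(1,2) True] R_def by auto
    have R0: "R > 0" using Rb Mpos by simp
    have gd: "\<bar>g1 w - g1 (w - s)\<bar> \<le> C3 * a R * \<bar>s\<bar> / R" using g1diff[OF R_def R0] .
    also have "\<dots> \<le> C3 * a M * \<bar>s\<bar> / (M / 2)"
    proof (rule frac_le)
      show "0 \<le> C3 * a M * \<bar>s\<bar>" using C30 aMpos by simp
      have "a R \<le> a M" using Rb R_def Mpos by (intro amono) (simp add: max_def)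
      then show "C3 * a R * \<bar>s\<bar> \<le> C3 * a M * \<bar>s\<bar>" using C30 by (intro mult_right_mono mult_left_mono) auto
      show "0 < M / 2" using Mpos by simp
      show "M / 2 \<le> R" using Rb by simp
    qed
    finally have gd2: "\<bar>g1 w - g1 (w - s)\<bar> \<le> 2 * C3 * a M * \<bar>s\<bar> / M" by (simp add: algebra_simps)
    have e: "s * (A - B) = - (m * (g1 w - g1 (w - s)))" using hx w(3) by simp
    then have "\<bar>s * (A - B)\<bar> = \<bar>m * (g1 w - g1 (w - s))\<bar>" by simp
    then have "\<bar>s\<bar> * \<bar>A - B\<bar> = \<bar>m\<bar> * \<bar>g1 w - g1 (w - s)\<bar>" by (simp only: abs_mult)
    also have "\<dots> \<le> \<bar>m\<bar> * (2 * C3 * a M * \<bar>s\<bar> / M)" using gd2 by (intro mult_left_mono) auto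
    finally have ssb: "\<bar>s\<bar> * \<bar>A - B\<bar> \<le> \<bar>s\<bar> * (2 * C3 * \<bar>m\<bar> * a M / M)" by (simp add: field_simps)
    have D: "\<bar>A - B\<bar> \<le> 2 * C3 * \<bar>m\<bar> * a M / M" using mult_left_le_imp_le[OF ssb] s0 by simp
    have "(A - B)^2 \<le> (2 * C3 * \<bar>m\<bar> * a M / M)^2"
      using D by (metis abs_ge_zero order_trans power2_abs power_mono)
    then have "(A - B)^2 / (A + B) \<le> (2 * C3 * \<bar>m\<bar> * a M / M)^2 / (a M / 2)"
      using P_lb aMpos by (intro frac_le) auto
    also have "\<dots> = 8 * C3^2 * m^2 * a M / M^2" using aMpos Mpos
      by (simp add: power2_eq_square field_simps)
    finally have q: "(A - B)^2 / (A + B) \<le> 8 * C3^2 * m^2 * a M / M^2" .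
    have "\<bar>\<beta>\<bar> * ((A - B)^2 / (A + B)) / (4 * \<bar>m\<bar>) \<le> \<bar>\<beta>\<bar> * (8 * C3^2 * m^2 * a M / M^2) / (4 * \<bar>m\<bar>)"
      using q by (intro divide_right_mono mult_left_mono) auto
    then have "cmod (b4 \<beta> a x1 x2 x3 x4) \<le> \<bar>\<beta>\<bar> * (8 * C3^2 * m^2 * a M / M^2) / (4 * \<bar>m\<bar>)"
      using cm2 by linarith
    also have "\<dots> = \<bar>\<beta>\<bar> * C3^2 * a M / M * (2 * \<bar>m\<bar> / M)"
      using m0 Mpos by (simp add: power2_eq_square field_simps)
    also have "\<dots> \<le> \<bar>\<beta>\<bar> * C3^2 * a M / M * 1"
      using True Mpos aMpos by (intro mult_left_mono) auto
    also have "\<dots> \<le> Cb \<beta> * a M / M"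
    proof -
      have "\<bar>\<beta>\<bar> * C3^2 \<le> Cb \<beta>" unfolding Cb_def using K0 by (intro mult_left_mono) auto
      then have "\<bar>\<beta>\<bar> * C3^2 * (a M / M) \<le> Cb \<beta> * (a M / M)" using aMpos Mpos by (intro mult_right_mono) auto
      then show ?thesis by simp
    qed
    finally show ?thesis .
  qed
qed

end

lemma step_isqrt: "1 / sqrt (real n + 1) \<le> 2 * sqrt (real n + 1) - 2 * sqrt (real n)"
proof -
  define a b where "a = sqrt (real n)" and "b = sqrt (real n + 1)"
  have b0: "b > 0" unfolding b_def by simp
  have a0: "a \<ge> 0" unfolding a_def by simp
  have bb: "b * b = a * a + 1" unfolding a_def b_def by simp
  have "2 * a * b \<le> a * a + b * b" using sum_squares_bound[of a b] by (simp add: power2_eq_square)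
  then have "1 \<le> (2 * b - 2 * a) * b" using bb by (simp add: algebra_simps)
  then have "1 / b \<le> 2 * b - 2 * a" using b0 by (simp add: divide_simps)
  then show ?thesis unfolding a_def b_def .
qed

lemma sum_isqrt: "(\<Sum>k=1..n. 1 / sqrt (real k)) \<le> 2 * sqrt (real n)"
proof (induction n)
  case 0 then show ?case by simp
next
  case (Suc n)
  have "(\<Sum>k=1..Suc n. 1 / sqrt (real k)) = (\<Sum>k=1..n. 1 / sqrt (real k)) + 1 / sqrt (real n + 1)"
    by (simp add: add.commute)
  also have "\<dots> \<le> 2 * sqrt (real n) + (2 * sqrt (real n + 1) - 2 * sqrt (real n))"
    using Suc step_isqrt[of n] by linarith
  finally show ?case by (simp add: add.commute)
qed

lemma step_tail:
  assumes "n \<ge> 1"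
  shows "1 / (real (n + 1) * sqrt (real (n + 1))) \<le> 2 / sqrt (real n) - 2 / sqrt (real (n + 1))"
proof -
  define a b where "a = sqrt (real n)" and "b = sqrt (real (n + 1))"
  have a0: "a > 0" unfolding a_def using assms by simp
  have ab: "a \<le> b" unfolding a_def b_def by simp
  have bb: "b * b = a * a + 1" unfolding a_def b_def by simp
  have nb: "real (n + 1) = b * b" unfolding b_def by simp
  have b0: "b > 0" using a0 ab by simp
  have h1: "a * a \<le> b * b" using ab a0 by (intro mult_mono) auto
  have h2: "a * b \<le> b * b" using ab b0 by (intro mult_right_mono) auto
  have "a * (a + b) \<le> 2 * (b * b)" using h1 h2 by (simp add: algebra_simps)
  then have "a * (a + b) * b \<le> 2 * (b * b) * b" using b0 by (intro mult_right_mono) auto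
  moreover have "(b - a) * (a + b) = 1" using bb by (simp add: algebra_simps)
  then have "(2 * (b * b * b) * (b - a)) * (a + b) = 2 * (b * b * b)" by (metis mult.assoc mult_1_right)
  ultimately have e1: "(a * b) * (a + b) \<le> (2 * (b * b * b) * (b - a)) * (a + b)"
    by (simp add: algebra_simps)
  have "a + b > 0" using a0 b0 by simp
  then have "a * b \<le> 2 * (b * b * b) * (b - a)" using e1 mult_le_cancel_right_pos by blast
  then have "1 / (b * b * b) \<le> 2 * (b - a) / (a * b)" using a0 b0 by (simp add: divide_simps) (simp add: algebra_simps)
  also have "2 * (b - a) / (a * b) = 2 / a - 2 / b" using a0 b0 by (simp add: field_simps)
  finally have fin: "1 / (b * b * b) \<le> 2 / a - 2 / b" .
  have "real (n + 1) * sqrt (real (n + 1)) = b * b * b" unfolding b_def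
    using real_sqrt_mult_self[of "real (n + 1)"] by simp
  then show ?thesis using fin unfolding a_def b_def by simp
qed

lemma sum_tail:
  assumes "m \<ge> 1"
  shows "(\<Sum>k=m+1..m+p. 1 / (real k * sqrt (real k))) \<le> 2 / sqrt (real m) - 2 / sqrt (real (m + p))"
proof (induction p)
  case 0 then show ?case by simp
next
  case (Suc p)
  have "(\<Sum>k=m+1..m+Suc p. 1 / (real k * sqrt (real k))) =
        (\<Sum>k=m+1..m+p. 1 / (real k * sqrt (real k))) + 1 / (real (m + p + 1) * sqrt (real (m + p + 1)))"
    by simp
  also have "\<dots> \<le> 2 / sqrt (real m) - 2 / sqrt (real (m + p)) + (2 / sqrt (real (m + p)) - 2 / sqrt (real (m + p + 1)))"
    using Suc step_tail[of "m + p"] assms by linarith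
  finally show ?case by simp
qed

definition phi :: "real \<Rightarrow> nat \<Rightarrow> real" where
  "phi D k = sqrt (D / max (real k) 1) / max D (max (real k) 1)"

lemma phi_nonneg: "D \<ge> 1 \<Longrightarrow> phi D k \<ge> 0" unfolding phi_def by simp

lemma phi_0: "D \<ge> 1 \<Longrightarrow> phi D 0 \<le> 1"
proof -
  assume D: "D \<ge> 1"
  have "phi D 0 = sqrt D / D" unfolding phi_def using D by simp
  also have "\<dots> \<le> 1" using D real_sqrt_le_iff[of D "D*D"] by (simp add: divide_simps)
  finally show ?thesis .
qed

lemma phi_le1: "D \<ge> 1 \<Longrightarrow> k \<ge> 1 \<Longrightarrow> phi D k \<le> (1 / sqrt D) * (1 / sqrt (real k))"
proof -
  assume D: "D \<ge> 1" and k: "k \<ge> 1"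
  have mk: "max (real k) 1 = real k" using k by simp
  have "phi D k \<le> sqrt (D / real k) / D" unfolding phi_def mk using D k
    by (intro divide_left_mono) auto
  also have "\<dots> = (1 / sqrt D) * (1 / sqrt (real k))" using D k
    by (simp add: real_sqrt_divide field_simps)
  finally show ?thesis .
qed

lemma phi_le2: "D \<ge> 1 \<Longrightarrow> k \<ge> 1 \<Longrightarrow> phi D k \<le> sqrt D * (1 / (real k * sqrt (real k)))"
proof -
  assume D: "D \<ge> 1" and k: "k \<ge> 1"
  have mk: "max (real k) 1 = real k" using k by simp
  have "phi D k \<le> sqrt (D / real k) / real k" unfolding phi_def mk using D k
    by (intro divide_left_mono) auto
  also have "\<dots> = sqrt D * (1 / (real k * sqrt (real k)))" using D k
    by (simp add: real_sqrt_divide field_simps)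
  finally show ?thesis .
qed


lemma phi_sum:
  assumes D: "D \<ge> 1"
  shows "(\<Sum>k=0..n. phi D k) \<le> 6"
proof -
  define m where "m = nat \<lfloor>D\<rfloor>"
  have m1: "m \<ge> 1" unfolding m_def using D by (simp add: le_nat_iff)
  have mD: "real m \<le> D" unfolding m_def using D by (simp add: of_nat_nat)
  have Dm: "D < real m + 1" unfolding m_def using D by (simp add: of_nat_nat)
  have "(\<Sum>k=0..n. phi D k) \<le> (\<Sum>k=0..m+n. phi D k)"
    using D by (intro sum_mono2) (auto simp: phi_nonneg)
  also have "(\<Sum>k=0..m+n. phi D k) = phi D 0 + (\<Sum>k=1..m+n. phi D k)"
    by (simp add: sum.atLeast_Suc_atMost)
  also have "(\<Sum>k=1..m+n. phi D k) = (\<Sum>k=1..m. phi D k) + (\<Sum>k=m+1..m+n. phi D k)"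
    using m1 by (intro sum.ub_add_nat) simp
  also have "(\<Sum>k=1..m. phi D k) \<le> 2"
  proof -
    have "(\<Sum>k=1..m. phi D k) \<le> (\<Sum>k=1..m. (1 / sqrt D) * (1 / sqrt (real k)))"
      using D by (intro sum_mono phi_le1) auto
    also have "\<dots> = (1 / sqrt D) * (\<Sum>k=1..m. 1 / sqrt (real k))" by (simp add: sum_distrib_left)
    also have "\<dots> \<le> (1 / sqrt D) * (2 * sqrt (real m))" using D by (intro mult_left_mono sum_isqrt) auto
    also have "\<dots> \<le> 2" using D mD by (simp add: divide_simps)
    finally show ?thesis .
  qed
  also have "(\<Sum>k=m+1..m+n. phi D k) \<le> 3"
  proof -
    have "(\<Sum>k=m+1..m+n. phi D k) \<le> (\<Sum>k=m+1..m+n. sqrt D * (1 / (real k * sqrt (real k))))"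
      using D by (intro sum_mono phi_le2) auto
    also have "\<dots> = sqrt D * (\<Sum>k=m+1..m+n. 1 / (real k * sqrt (real k)))" by (simp add: sum_distrib_left)
    also have "\<dots> \<le> sqrt D * (2 / sqrt (real m))"
    proof (rule mult_left_mono)
      have "0 \<le> 2 / sqrt (real (m + n))" by simp
      then show "(\<Sum>k=m+1..m+n. 1 / (real k * sqrt (real k))) \<le> 2 / sqrt (real m)"
        using sum_tail[OF m1, of n] by linarith
    qed (use D in simp)
    also have "\<dots> \<le> 3"
    proof -
      have "D \<le> 2 * real m" using Dm m1 by linarith
      then have "sqrt D \<le> sqrt 2 * sqrt (real m)" by (simp add: real_sqrt_mult[symmetric])
      moreover have "sqrt 2 \<le> 1.5"
      proof -
        have "sqrt 2 \<le> sqrt (1.5^2)" by (subst real_sqrt_le_iff) (simp add: power2_eq_square)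
        then show ?thesis by simp
      qed
      moreover have "sqrt 2 * sqrt (real m) \<le> 1.5 * sqrt (real m)"
        using calculation(2) by (intro mult_right_mono) auto
      ultimately have "sqrt D \<le> 1.5 * sqrt (real m)" by linarith
      moreover have "sqrt (real m) > 0" using m1 by simp
      ultimately show ?thesis by (simp add: divide_simps)
    qed
    finally show ?thesis .
  qed
  finally show ?thesis using phi_0[OF D] by linarith
qed


definition dd :: "int \<Rightarrow> real" where "dd x = max \<bar>real_of_int x\<bar> 1"
definition NN :: "int \<Rightarrow> int \<Rightarrow> real" where "NN u v = max (dd u) (dd v)"
definition rho :: "int \<Rightarrow> int \<Rightarrow> real" where "rho u v = sqrt (dd u / dd v) / NN u v"

lemma dd_ge1: "dd x \<ge> 1" unfolding dd_def by simp
lemma NN_pos: "NN u v > 0" unfolding NN_def using dd_ge1[of u] by simp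
lemma NN_comm: "NN u v = NN v u" unfolding NN_def by (simp add: max.commute)
lemma rho_phi: "rho u v = phi (dd u) (nat \<bar>v\<bar>)"
proof -
  have "real (nat \<bar>v\<bar>) = \<bar>real_of_int v\<bar>" by simp
  then show ?thesis unfolding rho_def phi_def NN_def dd_def by simp
qed
lemma rho_nonneg: "rho u v \<ge> 0" unfolding rho_def using NN_pos[of u v] dd_ge1[of u] dd_ge1[of v] by simp

lemma phi_reindex:
  assumes "finite V" "inj_on h V" "h ` V \<subseteq> {0..n}" "D \<ge> 1"
  shows "(\<Sum>v\<in>V. phi D (h v)) \<le> 6"
proof -
  have "(\<Sum>v\<in>V. phi D (h v)) = (\<Sum>k\<in>h ` V. phi D k)" by (simp add: sum.reindex[OF assms(2)] o_def)
  also have "\<dots> \<le> (\<Sum>k=0..n. phi D k)" using assms by (intro sum_mono2) (auto simp: phi_nonneg)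
  also have "\<dots> \<le> 6" using phi_sum assms(4) .
  finally show ?thesis .
qed

lemma rho_sum:
  assumes "finite U"
  shows "(\<Sum>v\<in>U. rho u v) \<le> 12"
proof -
  define n where "n = (\<Sum>v\<in>U. nat \<bar>v\<bar>)"
  have nb: "nat \<bar>v\<bar> \<le> n" if "v \<in> U" for v
    unfolding n_def using assms that by (intro member_le_sum) auto
  define U1 U2 where "U1 = U \<inter> {v. v \<ge> 0}" and "U2 = U - {v. v \<ge> 0}"
  have "(\<Sum>v\<in>U. rho u v) = (\<Sum>v\<in>U1. rho u v) + (\<Sum>v\<in>U2. rho u v)"
    unfolding U1_def U2_def using assms by (rule sum.Int_Diff)
  also have "(\<Sum>v\<in>U1. rho u v) \<le> 6" unfolding rho_phi
  proof (rule phi_reindex)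
    show "finite U1" using assms U1_def by simp
    show "inj_on (\<lambda>v. nat \<bar>v\<bar>) U1" unfolding U1_def by (auto simp: inj_on_def)
    show "(\<lambda>v. nat \<bar>v\<bar>) ` U1 \<subseteq> {0..n}" using nb unfolding U1_def by force
  qed (rule dd_ge1)
  also have "(\<Sum>v\<in>U2. rho u v) \<le> 6" unfolding rho_phi
  proof (rule phi_reindex)
    show "finite U2" using assms U2_def by simp
    show "inj_on (\<lambda>v. nat \<bar>v\<bar>) U2" unfolding U2_def by (auto simp: inj_on_def)
    show "(\<lambda>v. nat \<bar>v\<bar>) ` U2 \<subseteq> {0..n}" using nb unfolding U2_def by force
  qed (rule dd_ge1)
  finally show ?thesis by simp
qed

lemma amgm_t: "(t::real) > 0 \<Longrightarrow> x * y \<le> (x^2 * t + y^2 / t) / 2"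
proof -
  assume t: "t > 0"
  have "0 \<le> (x * t - y)^2 / t" using t by simp
  also have "(x * t - y)^2 / t = x^2 * t + y^2 / t - 2 * x * y" using t
    by (simp add: power2_eq_square field_simps)
  finally show ?thesis by simp
qed

lemma hilbert_pt:
  "F u * F v / NN u v \<le> ((F u)^2 * rho u v + (F v)^2 * rho v u) / 2"
proof -
  define t where "t = sqrt (dd u / dd v)"
  have t0: "t > 0" unfolding t_def using dd_ge1[of u] dd_ge1[of v] by simp
  have r1: "rho u v = t / NN u v" unfolding rho_def t_def ..
  have r2: "rho v u = (1 / t) / NN u v" unfolding rho_def t_def NN_comm[of v u]
    by (simp add: real_sqrt_divide)
  have "F u * F v \<le> ((F u)^2 * t + (F v)^2 / t) / 2" using amgm_t[OF t0] .
  then have "F u * F v / NN u v \<le> ((F u)^2 * t + (F v)^2 / t) / 2 / NN u v"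
    using NN_pos[of u v] by (intro divide_right_mono) auto
  also have "\<dots> = ((F u)^2 * rho u v + (F v)^2 * rho v u) / 2" unfolding r1 r2
    using NN_pos[of u v] by (simp add: field_simps)
  finally show ?thesis .
qed

lemma hilbert:
  assumes "finite U"
  shows "(\<Sum>u\<in>U. \<Sum>v\<in>U. F u * F v / NN u v) \<le> 12 * (\<Sum>u\<in>U. (F u)^2)"
proof -
  have 1: "(\<Sum>u\<in>U. \<Sum>v\<in>U. F u * F v / NN u v) \<le>
        (\<Sum>u\<in>U. \<Sum>v\<in>U. ((F u)^2 * rho u v + (F v)^2 * rho v u) / 2)"
    by (intro sum_mono hilbert_pt)
  have 2: "(\<Sum>u\<in>U. \<Sum>v\<in>U. ((F u)^2 * rho u v + (F v)^2 * rho v u) / 2)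
     = (\<Sum>u\<in>U. (F u)^2 * (\<Sum>v\<in>U. rho u v)) / 2 + (\<Sum>u\<in>U. \<Sum>v\<in>U. (F v)^2 * rho v u) / 2"
    by (simp add: sum_distrib_left sum.distrib sum_divide_distrib add_divide_distrib)
  have 3: "(\<Sum>u\<in>U. \<Sum>v\<in>U. (F v)^2 * rho v u) = (\<Sum>v\<in>U. (F v)^2 * (\<Sum>u\<in>U. rho v u))"
    by (subst sum.swap) (simp add: sum_distrib_left)
  have 4: "(\<Sum>u\<in>U. (F u)^2 * (\<Sum>v\<in>U. rho u v)) \<le> (\<Sum>u\<in>U. (F u)^2 * 12)"
    using rho_sum[OF assms] by (intro sum_mono mult_left_mono) auto
  have 5: "(\<Sum>u\<in>U. (F u)^2 * 12) = 12 * (\<Sum>u\<in>U. (F u)^2)" by (simp add: sum_distrib_left mult.commute)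
  show ?thesis using 1 2 3 4 5 by linarith
qed


definition W :: "(int \<Rightarrow> real) \<Rightarrow> (int \<Rightarrow> real) \<Rightarrow> int \<Rightarrow> int \<Rightarrow> int \<Rightarrow> real" where
  "W F G p q r = G r * G (- (p + q + r)) * F p * F q / NN p q"

lemma inner_G:
  fixes G :: "int \<Rightarrow> real"
  assumes "finite V" "\<And>T. finite T \<Longrightarrow> (\<Sum>x\<in>T. (G x)^2) \<le> E"
  shows "(\<Sum>w\<in>V. G w * G (- (c + w))) \<le> E"
proof -
  have "(\<Sum>w\<in>V. G w * G (- (c + w))) \<le> (\<Sum>w\<in>V. ((G w)^2 + (G (- (c + w)))^2) / 2)"
  proof (intro sum_mono)
    fix w
    have "2 * (G w * G (- (c + w))) \<le> (G w)^2 + (G (- (c + w)))^2"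
      using sum_squares_bound[of "G w" "G (- (c + w))"] by (simp add: power2_eq_square)
    then show "G w * G (- (c + w)) \<le> ((G w)^2 + (G (- (c + w)))^2) / 2" by simp
  qed
  also have "\<dots> = (\<Sum>w\<in>V. (G w)^2) / 2 + (\<Sum>w\<in>V. (G (- (c + w)))^2) / 2"
    by (simp add: sum.distrib sum_divide_distrib add_divide_distrib)
  also have "(\<Sum>w\<in>V. (G (- (c + w)))^2) = (\<Sum>y\<in>(\<lambda>w. - (c + w)) ` V. (G y)^2)"
    by (subst sum.reindex) (auto simp: inj_on_def)
  also have "(\<Sum>y\<in>(\<lambda>w. - (c + w)) ` V. (G y)^2) \<le> E" using assms by simp
  also have "(\<Sum>w\<in>V. (G w)^2) \<le> E" using assms by simp
  finally show ?thesis by simp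
qed

lemma Wsum:
  fixes p q r :: "'x \<Rightarrow> int" and F G :: "int \<Rightarrow> real"
  assumes S: "finite S" "inj_on (\<lambda>x. (p x, q x, r x)) S"
    and F0: "\<And>x. F x \<ge> 0" and G0: "\<And>x. G x \<ge> 0"
    and FL: "\<And>T. finite T \<Longrightarrow> (\<Sum>x\<in>T. (F x)^2) \<le> L"
    and GE: "\<And>T. finite T \<Longrightarrow> (\<Sum>x\<in>T. (G x)^2) \<le> E"
  shows "(\<Sum>x\<in>S. W F G (p x) (q x) (r x)) \<le> 12 * L * E"
proof -
  define T where "T = (\<lambda>x. (p x, q x, r x)) ` S"
  define U where "U = fst ` T \<union> (fst \<circ> snd) ` T"
  define V where "V = (snd \<circ> snd) ` T"
  have fT: "finite T" using S T_def by simp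
  have fU: "finite U" "finite V" using fT U_def V_def by auto
  have E0: "E \<ge> 0" using GE[of "{}"] by simp
  have Wnn: "W F G u v w \<ge> 0" for u v w unfolding W_def using F0 G0 NN_pos[of u v] by simp
  have "(\<Sum>x\<in>S. W F G (p x) (q x) (r x)) = (\<Sum>(u, v, w)\<in>T. W F G u v w)"
    unfolding T_def by (subst sum.reindex[OF S(2)]) (simp_all add: o_def)
  also have "\<dots> \<le> (\<Sum>(u, v, w)\<in>U \<times> (U \<times> V). W F G u v w)"
  proof (rule sum_mono2)
    show "finite (U \<times> (U \<times> V))" using fU by simp
    show "T \<subseteq> U \<times> (U \<times> V)" unfolding U_def V_def by force
  qed (auto simp: Wnn)
  also have "\<dots> = (\<Sum>u\<in>U. \<Sum>v\<in>U. \<Sum>w\<in>V. W F G u v w)"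
    by (simp add: sum.cartesian_product)
  also have "\<dots> = (\<Sum>u\<in>U. \<Sum>v\<in>U. F u * F v / NN u v * (\<Sum>w\<in>V. G w * G (- ((u + v) + w))))"
    unfolding W_def by (simp add: sum_distrib_left algebra_simps)
  also have "\<dots> \<le> (\<Sum>u\<in>U. \<Sum>v\<in>U. F u * F v / NN u v * E)"
    by (intro sum_mono mult_left_mono inner_G[OF fU(2) GE]) (use F0 NN_pos in \<open>auto intro!: divide_nonneg_pos\<close>)
  also have "\<dots> = (\<Sum>u\<in>U. \<Sum>v\<in>U. F u * F v / NN u v) * E"
    by (simp add: sum_distrib_right)
  also have "\<dots> \<le> (12 * (\<Sum>u\<in>U. (F u)^2)) * E"
    using hilbert[OF fU(1)] E0 by (intro mult_right_mono) auto
  also have "\<dots> \<le> (12 * L) * E"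
    using FL[OF fU(1)] E0 by (intro mult_right_mono) auto
  finally show ?thesis .
qed

lemma six_pairs:
  fixes y1 y2 y3 y4 M :: real
  assumes s: "y1 + y2 + y3 + y4 = 0" and M: "M = max (max \<bar>y1\<bar> \<bar>y2\<bar>) (max \<bar>y3\<bar> \<bar>y4\<bar>)"
  shows "(M \<le> 3 * \<bar>y1\<bar> \<and> M \<le> 3 * \<bar>y2\<bar>) \<or> (M \<le> 3 * \<bar>y1\<bar> \<and> M \<le> 3 * \<bar>y3\<bar>) \<or>
         (M \<le> 3 * \<bar>y1\<bar> \<and> M \<le> 3 * \<bar>y4\<bar>) \<or> (M \<le> 3 * \<bar>y2\<bar> \<and> M \<le> 3 * \<bar>y3\<bar>) \<or>
         (M \<le> 3 * \<bar>y2\<bar> \<and> M \<le> 3 * \<bar>y4\<bar>) \<or> (M \<le> 3 * \<bar>y3\<bar> \<and> M \<le> 3 * \<bar>y4\<bar>)"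
proof -
  have t: "\<bar>y1\<bar> \<le> \<bar>y2\<bar> + \<bar>y3\<bar> + \<bar>y4\<bar>" "\<bar>y2\<bar> \<le> \<bar>y1\<bar> + \<bar>y3\<bar> + \<bar>y4\<bar>"
          "\<bar>y3\<bar> \<le> \<bar>y1\<bar> + \<bar>y2\<bar> + \<bar>y4\<bar>" "\<bar>y4\<bar> \<le> \<bar>y1\<bar> + \<bar>y2\<bar> + \<bar>y3\<bar>"
    using s by (auto simp: abs_if)
  have m: "M = \<bar>y1\<bar> \<or> M = \<bar>y2\<bar> \<or> M = \<bar>y3\<bar> \<or> M = \<bar>y4\<bar>" unfolding M by (auto simp: max_def)
  have le: "\<bar>y1\<bar> \<le> M" "\<bar>y2\<bar> \<le> M" "\<bar>y3\<bar> \<le> M" "\<bar>y4\<bar> \<le> M" unfolding M by (simp_all add: le_max_iff_disj)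
  show ?thesis using t m le by linarith
qed

definition Ff :: "(int \<Rightarrow> complex) \<Rightarrow> int \<Rightarrow> real" where
  "Ff fc x = max (cmod (fc x)) (cmod (fc (- x)))"
definition Gf :: "(real \<Rightarrow> real) \<Rightarrow> (int \<Rightarrow> complex) \<Rightarrow> int \<Rightarrow> real" where
  "Gf a fc x = sqrt (a (of_int x)) * Ff fc x"
definition S6 :: "(int \<Rightarrow> real) \<Rightarrow> (int \<Rightarrow> real) \<Rightarrow> int \<times> int \<times> int \<times> int \<Rightarrow> real" where
  "S6 F G x = (case x of (x1, x2, x3, x4) \<Rightarrow>
     W F G x3 x4 x1 + W F G x2 x4 x1 + W F G x2 x3 x1 + W F G x1 x4 x2 + W F G x1 x3 x2 + W F G x1 x2 x3)"

lemma Ff_nonneg: "Ff fc x \<ge> 0" unfolding Ff_def by (simp add: le_max_iff_disj)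

lemma W_nonneg: "(\<And>x. F x \<ge> 0) \<Longrightarrow> (\<And>x. G x \<ge> 0) \<Longrightarrow> W F G p q r \<ge> 0"
  unfolding W_def using NN_pos[of p q] by (simp add: divide_nonneg_pos)

context AC begin

lemma Cb_eq: "Cb \<beta> = \<bar>\<beta>\<bar> * ((4 + 10 * K)^2 + 2 * (1 + K))" unfolding Cb_def C3_def ..

lemma pair_case:
  fixes F :: "int \<Rightarrow> real" and xi xj xk xl :: int and M :: real
  assumes F0: "\<And>x. F x \<ge> 0" and M1: "M \<ge> 1"
    and hi: "M \<le> 3 * \<bar>real_of_int xi\<bar>" and hj: "M \<le> 3 * \<bar>real_of_int xj\<bar>"
    and hk: "\<bar>real_of_int xk\<bar> \<le> M" and hl: "\<bar>real_of_int xl\<bar> \<le> M"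
    and xj: "xj = - (xk + xl + xi)"
  shows "a M / M * (F xi * F xj * F xk * F xl) \<le> K^2 * W F (\<lambda>x. sqrt (a (of_int x)) * F x) xk xl xi"
proof -
  define ai aj where "ai = a (of_int xi)" and "aj = a (of_int xj)"
  have ai0: "ai > 0" and aj0: "aj > 0" unfolding ai_def aj_def using apos by auto
  have i: "a M \<le> K^2 * ai" unfolding ai_def using M1 hi by (intro aquarter) auto
  have j: "a M \<le> K^2 * aj" unfolding aj_def using M1 hj by (intro aquarter) auto
  have aM0: "a M > 0" by (rule apos)
  have "a M * a M \<le> (K^2 * ai) * (K^2 * aj)" using i j aM0 by (intro mult_mono) auto
  then have "sqrt (a M * a M) \<le> sqrt ((K^2 * ai) * (K^2 * aj))" by (rule real_sqrt_le_mono)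
  also have "sqrt ((K^2 * ai) * (K^2 * aj)) = K^2 * (sqrt ai * sqrt aj)"
    using ai0 aj0 by (simp add: real_sqrt_mult real_sqrt_abs power2_eq_square)
  finally have aMb: "a M \<le> K^2 * (sqrt ai * sqrt aj)" using aM0 by simp
  have NM: "NN xk xl \<le> M" unfolding NN_def dd_def using hk hl M1 by simp
  have N0: "NN xk xl > 0" by (rule NN_pos)
  have q: "a M / M \<le> K^2 * (sqrt ai * sqrt aj) / NN xk xl"
    using aMb NM N0 aM0 by (intro frac_le) auto
  have P0: "F xi * F xj * F xk * F xl \<ge> 0" using F0 by simp
  have "a M / M * (F xi * F xj * F xk * F xl) \<le> K^2 * (sqrt ai * sqrt aj) / NN xk xl * (F xi * F xj * F xk * F xl)"
    using q P0 by (rule mult_right_mono)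
  also have "\<dots> = K^2 * W F (\<lambda>x. sqrt (a (of_int x)) * F x) xk xl xi"
    unfolding W_def ai_def aj_def xj by (simp add: algebra_simps)
  finally show ?thesis .
qed

lemma summand_bound:
  assumes x: "x \<in> Gamma4"
  shows "cmod (E1_summand \<beta> a fc x) \<le> Cb \<beta> * K^2 * S6 (Ff fc) (Gf a fc) x"
proof -
  obtain x1 x2 x3 x4 where xe: "x = (x1, x2, x3, x4)" by (cases x) auto
  have s: "x1 + x2 + x3 + x4 = 0" and nz: "x1 + x2 \<noteq> 0" "x2 + x3 \<noteq> 0" using x xe by (auto simp: Gamma4_def)
  define r1 r2 r3 r4 where "r1 = real_of_int x1" and "r2 = real_of_int x2" and "r3 = real_of_int x3" and "r4 = real_of_int x4"
  have rs: "r1 + r2 + r3 + r4 = 0" using s unfolding r1_def r2_def r3_def r4_def by (metis of_int_add of_int_0)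
  have rnz: "r1 + r2 \<noteq> 0" "r2 + r3 \<noteq> 0" using nz unfolding r1_def r2_def r3_def r4_def by (metis of_int_add of_int_eq_0_iff)+
  define M where "M = max (max \<bar>r1\<bar> \<bar>r2\<bar>) (max \<bar>r3\<bar> \<bar>r4\<bar>)"
  have M1: "M \<ge> 1"
  proof -
    have "x1 \<noteq> 0 \<or> x2 \<noteq> 0" using nz by auto
    then have "\<bar>r1\<bar> \<ge> 1 \<or> \<bar>r2\<bar> \<ge> 1" unfolding r1_def r2_def by auto
    then show ?thesis unfolding M_def by auto
  qed
  define F where "F = Ff fc"
  define G where "G = Gf a fc"
  have F0: "\<And>x. F x \<ge> 0" unfolding F_def by (rule Ff_nonneg)
  have G0: "\<And>x. G x \<ge> 0" unfolding G_def Gf_def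
    by (intro mult_nonneg_nonneg real_sqrt_ge_zero Ff_nonneg less_imp_le[OF apos])
  have Gdef: "G = (\<lambda>x. sqrt (a (of_int x)) * F x)" unfolding G_def Gf_def F_def ..
  have b: "cmod (b4 \<beta> a r1 r2 r3 r4) \<le> Cb \<beta> * a M / M"
    unfolding M_def using b4_bound[OF rs rnz] .
  have Cb0: "Cb \<beta> \<ge> 0" unfolding Cb_def C3_def using Kpos by simp
  have "cmod (E1_summand \<beta> a fc x) = cmod (b4 \<beta> a r1 r2 r3 r4) * cmod (of_int (sgn (x1 + x2)) :: complex)
      * cmod (fc x1) * cmod (fc (- x2)) * cmod (fc x3) * cmod (fc (- x4))"
    unfolding xe E1_summand_def conj_hat_def r1_def r2_def r3_def r4_def by (simp add: norm_mult)
  also have "\<dots> \<le> cmod (b4 \<beta> a r1 r2 r3 r4) * 1 * F x1 * F x2 * F x3 * F x4"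
  proof -
    have "cmod (of_int (sgn (x1 + x2)) :: complex) \<le> 1" by (simp add: sgn_if)
    moreover have "cmod (fc x1) \<le> F x1" "cmod (fc (- x2)) \<le> F x2" "cmod (fc x3) \<le> F x3" "cmod (fc (- x4)) \<le> F x4"
      unfolding F_def Ff_def by auto
    ultimately show ?thesis using F0 by (intro mult_mono) auto
  qed
  also have "\<dots> = cmod (b4 \<beta> a r1 r2 r3 r4) * (F x1 * F x2 * F x3 * F x4)" by (simp add: mult.assoc)
  also have "\<dots> \<le> Cb \<beta> * a M / M * (F x1 * F x2 * F x3 * F x4)"
    by (rule mult_right_mono[OF b]) (use F0 in simp)
  also have "\<dots> = Cb \<beta> * (a M / M * (F x1 * F x2 * F x3 * F x4))" by simp
  also have "\<dots> \<le> Cb \<beta> * (K^2 * S6 F G x)"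
  proof (rule mult_left_mono[OF _ Cb0])
    have Wn: "\<And>p q r. W F G p q r \<ge> 0" using W_nonneg F0 G0 by blast
    have le: "\<bar>r1\<bar> \<le> M" "\<bar>r2\<bar> \<le> M" "\<bar>r3\<bar> \<le> M" "\<bar>r4\<bar> \<le> M" unfolding M_def by (simp_all add: le_max_iff_disj)
    have S: "S6 F G x = W F G x3 x4 x1 + W F G x2 x4 x1 + W F G x2 x3 x1 + W F G x1 x4 x2 + W F G x1 x3 x2 + W F G x1 x2 x3"
      unfolding S6_def xe by simp
    have K0: "K^2 \<ge> 0" by simp
    have e2: "x2 = - (x3 + x4 + x1)" "x3 = - (x2 + x4 + x1)" "x4 = - (x2 + x3 + x1)"
      "x3 = - (x1 + x4 + x2)" "x4 = - (x1 + x3 + x2)" "x4 = - (x1 + x2 + x3)" using s by linarith+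
    have Wl: "W F G x3 x4 x1 \<le> S6 F G x" "W F G x2 x4 x1 \<le> S6 F G x" "W F G x2 x3 x1 \<le> S6 F G x"
      "W F G x1 x4 x2 \<le> S6 F G x" "W F G x1 x3 x2 \<le> S6 F G x" "W F G x1 x2 x3 \<le> S6 F G x"
      unfolding S using Wn[of x3 x4 x1] Wn[of x2 x4 x1] Wn[of x2 x3 x1] Wn[of x1 x4 x2] Wn[of x1 x3 x2]
        Wn[of x1 x2 x3] by linarith+
    have KW: "\<And>u. u \<le> S6 F G x \<Longrightarrow> K^2 * u \<le> K^2 * S6 F G x" using K0 by (rule mult_left_mono[rotated])
    from six_pairs[OF rs M_def] show "a M / M * (F x1 * F x2 * F x3 * F x4) \<le> K^2 * S6 F G x"
    proof (elim disjE conjE)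
      assume h: "M \<le> 3 * \<bar>r1\<bar>" "M \<le> 3 * \<bar>r2\<bar>"
      have "a M / M * (F x1 * F x2 * F x3 * F x4) \<le> K^2 * W F G x3 x4 x1"
        unfolding Gdef using pair_case[OF F0 M1 h(1)[unfolded r1_def] h(2)[unfolded r2_def] le(3)[unfolded r3_def] le(4)[unfolded r4_def] e2(1)] .
      moreover have "F x1 * F x2 * F x3 * F x4 = F x1 * F x2 * F x3 * F x4" by (simp add: ac_simps)
      ultimately have "a M / M * (F x1 * F x2 * F x3 * F x4) \<le> K^2 * W F G x3 x4 x1" by simp
      then show ?thesis using KW[OF Wl(1)] by linarith
    next
      assume h: "M \<le> 3 * \<bar>r1\<bar>" "M \<le> 3 * \<bar>r3\<bar>"
      have "a M / M * (F x1 * F x3 * F x2 * F x4) \<le> K^2 * W F G x2 x4 x1"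
        unfolding Gdef using pair_case[OF F0 M1 h(1)[unfolded r1_def] h(2)[unfolded r3_def] le(2)[unfolded r2_def] le(4)[unfolded r4_def] e2(2)] .
      moreover have "F x1 * F x3 * F x2 * F x4 = F x1 * F x2 * F x3 * F x4" by (simp add: ac_simps)
      ultimately have "a M / M * (F x1 * F x2 * F x3 * F x4) \<le> K^2 * W F G x2 x4 x1" by simp
      then show ?thesis using KW[OF Wl(2)] by linarith
    next
      assume h: "M \<le> 3 * \<bar>r1\<bar>" "M \<le> 3 * \<bar>r4\<bar>"
      have "a M / M * (F x1 * F x4 * F x2 * F x3) \<le> K^2 * W F G x2 x3 x1"
        unfolding Gdef using pair_case[OF F0 M1 h(1)[unfolded r1_def] h(2)[unfolded r4_def] le(2)[unfolded r2_def] le(3)[unfolded r3_def] e2(3)] .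
      moreover have "F x1 * F x4 * F x2 * F x3 = F x1 * F x2 * F x3 * F x4" by (simp add: ac_simps)
      ultimately have "a M / M * (F x1 * F x2 * F x3 * F x4) \<le> K^2 * W F G x2 x3 x1" by simp
      then show ?thesis using KW[OF Wl(3)] by linarith
    next
      assume h: "M \<le> 3 * \<bar>r2\<bar>" "M \<le> 3 * \<bar>r3\<bar>"
      have "a M / M * (F x2 * F x3 * F x1 * F x4) \<le> K^2 * W F G x1 x4 x2"
        unfolding Gdef using pair_case[OF F0 M1 h(1)[unfolded r2_def] h(2)[unfolded r3_def] le(1)[unfolded r1_def] le(4)[unfolded r4_def] e2(4)] .
      moreover have "F x2 * F x3 * F x1 * F x4 = F x1 * F x2 * F x3 * F x4" by (simp add: ac_simps)
      ultimately have "a M / M * (F x1 * F x2 * F x3 * F x4) \<le> K^2 * W F G x1 x4 x2" by simp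
      then show ?thesis using KW[OF Wl(4)] by linarith
    next
      assume h: "M \<le> 3 * \<bar>r2\<bar>" "M \<le> 3 * \<bar>r4\<bar>"
      have "a M / M * (F x2 * F x4 * F x1 * F x3) \<le> K^2 * W F G x1 x3 x2"
        unfolding Gdef using pair_case[OF F0 M1 h(1)[unfolded r2_def] h(2)[unfolded r4_def] le(1)[unfolded r1_def] le(3)[unfolded r3_def] e2(5)] .
      moreover have "F x2 * F x4 * F x1 * F x3 = F x1 * F x2 * F x3 * F x4" by (simp add: ac_simps)
      ultimately have "a M / M * (F x1 * F x2 * F x3 * F x4) \<le> K^2 * W F G x1 x3 x2" by simp
      then show ?thesis using KW[OF Wl(5)] by linarith
    next
      assume h: "M \<le> 3 * \<bar>r3\<bar>" "M \<le> 3 * \<bar>r4\<bar>"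
      have "a M / M * (F x3 * F x4 * F x1 * F x2) \<le> K^2 * W F G x1 x2 x3"
        unfolding Gdef using pair_case[OF F0 M1 h(1)[unfolded r3_def] h(2)[unfolded r4_def] le(1)[unfolded r1_def] le(2)[unfolded r2_def] e2(6)] .
      moreover have "F x3 * F x4 * F x1 * F x2 = F x1 * F x2 * F x3 * F x4" by (simp add: ac_simps)
      ultimately have "a M / M * (F x1 * F x2 * F x3 * F x4) \<le> K^2 * W F G x1 x2 x3" by simp
      then show ?thesis using KW[OF Wl(6)] by linarith
    qed
  qed
  finally show ?thesis unfolding F_def G_def by (simp add: mult.assoc)
qed

end

lemma Ff_sq: "(Ff fc x)^2 \<le> (cmod (fc x))^2 + (cmod (fc (- x)))^2"
  unfolding Ff_def by (cases "cmod (fc x) \<le> cmod (fc (- x))") (simp_all add: max_def)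

lemma sum_neg_le:
  fixes h :: "int \<Rightarrow> real"
  assumes "h summable_on UNIV" "\<And>x. h x \<ge> 0" "finite T"
  shows "(\<Sum>x\<in>T. h (- x)) \<le> infsum h UNIV"
proof -
  have "(\<Sum>x\<in>T. h (- x)) = (\<Sum>y\<in>uminus ` T. h y)" by (subst sum.reindex) (auto simp: inj_on_def)
  also have "\<dots> \<le> infsum h UNIV" using assms by (intro finite_sum_le_infsum) auto
  finally show ?thesis .
qed

lemma FL:
  assumes "(\<lambda>\<xi>. (cmod (fc \<xi>))\<^sup>2) summable_on UNIV" "finite T"
  shows "(\<Sum>x\<in>T. (Ff fc x)^2) \<le> 2 * L2sq fc"
proof -
  have "(\<Sum>x\<in>T. (Ff fc x)^2) \<le> (\<Sum>x\<in>T. (cmod (fc x))^2) + (\<Sum>x\<in>T. (cmod (fc (- x)))^2)"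
    by (simp add: sum.distrib[symmetric] sum_mono Ff_sq)
  also have "(\<Sum>x\<in>T. (cmod (fc x))^2) \<le> L2sq fc" unfolding L2sq_def
    using assms by (intro finite_sum_le_infsum) auto
  also have "(\<Sum>x\<in>T. (cmod (fc (- x)))^2) \<le> L2sq fc" unfolding L2sq_def
    using sum_neg_le[OF assms(1) _ assms(2)] by simp
  finally show ?thesis by simp
qed

context AC begin

lemma GE:
  assumes "(\<lambda>\<xi>. a (of_int \<xi>) * (cmod (fc \<xi>))\<^sup>2) summable_on UNIV" "finite T"
  shows "(\<Sum>x\<in>T. (Gf a fc x)^2) \<le> 2 * E0 a fc"
proof -
  have pt: "(Gf a fc x)^2 \<le> a (of_int x) * (cmod (fc x))^2 + a (of_int (- x)) * (cmod (fc (- x)))^2" for x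
  proof -
    have a0: "a (of_int x) > 0" by (rule apos)
    have "(Gf a fc x)^2 = a (of_int x) * (Ff fc x)^2" unfolding Gf_def using a0
      by (simp add: power_mult_distrib)
    also have "\<dots> \<le> a (of_int x) * ((cmod (fc x))^2 + (cmod (fc (- x)))^2)"
      using a0 Ff_sq by (intro mult_left_mono) auto
    also have "a (of_int (- x)) = a (of_int x)" using aeven[of "of_int x"] by simp
    ultimately show ?thesis by (simp add: algebra_simps)
  qed
  have "(\<Sum>x\<in>T. (Gf a fc x)^2) \<le> (\<Sum>x\<in>T. a (of_int x) * (cmod (fc x))^2 + a (of_int (- x)) * (cmod (fc (- x)))^2)"
    by (rule sum_mono[OF pt])
  also have "\<dots> = (\<Sum>x\<in>T. a (of_int x) * (cmod (fc x))^2) + (\<Sum>x\<in>T. a (of_int (- x)) * (cmod (fc (- x)))^2)"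
    by (rule sum.distrib)
  also have "(\<Sum>x\<in>T. a (of_int x) * (cmod (fc x))^2) \<le> E0 a fc" unfolding E0_def
    using assms by (intro finite_sum_le_infsum) (auto intro!: mult_nonneg_nonneg less_imp_le[OF apos])
  also have "(\<Sum>x\<in>T. a (of_int (- x)) * (cmod (fc (- x)))^2) \<le> E0 a fc" unfolding E0_def
    using sum_neg_le[OF assms(1) _ assms(2)] apos by (simp add: less_imp_le)
  finally show ?thesis by simp
qed

end

lemma S6_alt: "S6 F G x = W F G (fst (snd (snd x))) (snd (snd (snd x))) (fst x) + W F G (fst (snd x)) (snd (snd (snd x))) (fst x)
   + W F G (fst (snd x)) (fst (snd (snd x))) (fst x) + W F G (fst x) (snd (snd (snd x))) (fst (snd x))
   + W F G (fst x) (fst (snd (snd x))) (fst (snd x)) + W F G (fst x) (fst (snd x)) (fst (snd (snd x)))"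
  by (cases x) (simp add: S6_def)

lemma G4: "x \<in> Gamma4 \<Longrightarrow> fst x + fst (snd x) + fst (snd (snd x)) + snd (snd (snd x)) = 0"
  by (cases x) (auto simp: Gamma4_def)

lemma G4_inj1:
  assumes S: "S \<subseteq> Gamma4"
  shows "inj_on (\<lambda>x. (fst (snd (snd x)), snd (snd (snd x)), fst x)) S"
proof (rule inj_onI)
  fix x y assume xy: "x \<in> S" "y \<in> S" and e: "(\<lambda>x. (fst (snd (snd x)), snd (snd (snd x)), fst x)) x = (\<lambda>x. (fst (snd (snd x)), snd (snd (snd x)), fst x)) y"
  have g: "x \<in> Gamma4" "y \<in> Gamma4" using xy S by auto
  obtain x1 x2 x3 x4 where xe: "x = (x1, x2, x3, x4)" by (cases x) auto
  obtain y1 y2 y3 y4 where ye: "y = (y1, y2, y3, y4)" by (cases y) auto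
  have "x1 + x2 + x3 + x4 = 0" "y1 + y2 + y3 + y4 = 0" using G4[OF g(1)] G4[OF g(2)] xe ye by auto
  moreover have e': "x3 = y3 \<and> x4 = y4 \<and> x1 = y1" using e unfolding xe ye by simp
  ultimately have "x1 = y1" "x2 = y2" "x3 = y3" "x4 = y4" by linarith+
  then show "x = y" unfolding xe ye by simp
qed

lemma G4_inj2:
  assumes S: "S \<subseteq> Gamma4"
  shows "inj_on (\<lambda>x. (fst (snd x), snd (snd (snd x)), fst x)) S"
proof (rule inj_onI)
  fix x y assume xy: "x \<in> S" "y \<in> S" and e: "(\<lambda>x. (fst (snd x), snd (snd (snd x)), fst x)) x = (\<lambda>x. (fst (snd x), snd (snd (snd x)), fst x)) y"
  have g: "x \<in> Gamma4" "y \<in> Gamma4" using xy S by auto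
  obtain x1 x2 x3 x4 where xe: "x = (x1, x2, x3, x4)" by (cases x) auto
  obtain y1 y2 y3 y4 where ye: "y = (y1, y2, y3, y4)" by (cases y) auto
  have "x1 + x2 + x3 + x4 = 0" "y1 + y2 + y3 + y4 = 0" using G4[OF g(1)] G4[OF g(2)] xe ye by auto
  moreover have e': "x2 = y2 \<and> x4 = y4 \<and> x1 = y1" using e unfolding xe ye by simp
  ultimately have "x1 = y1" "x2 = y2" "x3 = y3" "x4 = y4" by linarith+
  then show "x = y" unfolding xe ye by simp
qed

lemma G4_inj3:
  assumes S: "S \<subseteq> Gamma4"
  shows "inj_on (\<lambda>x. (fst (snd x), fst (snd (snd x)), fst x)) S"
proof (rule inj_onI)
  fix x y assume xy: "x \<in> S" "y \<in> S" and e: "(\<lambda>x. (fst (snd x), fst (snd (snd x)), fst x)) x = (\<lambda>x. (fst (snd x), fst (snd (snd x)), fst x)) y"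
  have g: "x \<in> Gamma4" "y \<in> Gamma4" using xy S by auto
  obtain x1 x2 x3 x4 where xe: "x = (x1, x2, x3, x4)" by (cases x) auto
  obtain y1 y2 y3 y4 where ye: "y = (y1, y2, y3, y4)" by (cases y) auto
  have "x1 + x2 + x3 + x4 = 0" "y1 + y2 + y3 + y4 = 0" using G4[OF g(1)] G4[OF g(2)] xe ye by auto
  moreover have e': "x2 = y2 \<and> x3 = y3 \<and> x1 = y1" using e unfolding xe ye by simp
  ultimately have "x1 = y1" "x2 = y2" "x3 = y3" "x4 = y4" by linarith+
  then show "x = y" unfolding xe ye by simp
qed

lemma G4_inj4:
  assumes S: "S \<subseteq> Gamma4"
  shows "inj_on (\<lambda>x. (fst x, snd (snd (snd x)), fst (snd x))) S"
proof (rule inj_onI)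
  fix x y assume xy: "x \<in> S" "y \<in> S" and e: "(\<lambda>x. (fst x, snd (snd (snd x)), fst (snd x))) x = (\<lambda>x. (fst x, snd (snd (snd x)), fst (snd x))) y"
  have g: "x \<in> Gamma4" "y \<in> Gamma4" using xy S by auto
  obtain x1 x2 x3 x4 where xe: "x = (x1, x2, x3, x4)" by (cases x) auto
  obtain y1 y2 y3 y4 where ye: "y = (y1, y2, y3, y4)" by (cases y) auto
  have "x1 + x2 + x3 + x4 = 0" "y1 + y2 + y3 + y4 = 0" using G4[OF g(1)] G4[OF g(2)] xe ye by auto
  moreover have e': "x1 = y1 \<and> x4 = y4 \<and> x2 = y2" using e unfolding xe ye by simp
  ultimately have "x1 = y1" "x2 = y2" "x3 = y3" "x4 = y4" by linarith+
  then show "x = y" unfolding xe ye by simp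
qed

lemma G4_inj5:
  assumes S: "S \<subseteq> Gamma4"
  shows "inj_on (\<lambda>x. (fst x, fst (snd (snd x)), fst (snd x))) S"
proof (rule inj_onI)
  fix x y assume xy: "x \<in> S" "y \<in> S" and e: "(\<lambda>x. (fst x, fst (snd (snd x)), fst (snd x))) x = (\<lambda>x. (fst x, fst (snd (snd x)), fst (snd x))) y"
  have g: "x \<in> Gamma4" "y \<in> Gamma4" using xy S by auto
  obtain x1 x2 x3 x4 where xe: "x = (x1, x2, x3, x4)" by (cases x) auto
  obtain y1 y2 y3 y4 where ye: "y = (y1, y2, y3, y4)" by (cases y) auto
  have "x1 + x2 + x3 + x4 = 0" "y1 + y2 + y3 + y4 = 0" using G4[OF g(1)] G4[OF g(2)] xe ye by auto
  moreover have e': "x1 = y1 \<and> x3 = y3 \<and> x2 = y2" using e unfolding xe ye by simp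
  ultimately have "x1 = y1" "x2 = y2" "x3 = y3" "x4 = y4" by linarith+
  then show "x = y" unfolding xe ye by simp
qed

lemma G4_inj6:
  assumes S: "S \<subseteq> Gamma4"
  shows "inj_on (\<lambda>x. (fst x, fst (snd x), fst (snd (snd x)))) S"
proof (rule inj_onI)
  fix x y assume xy: "x \<in> S" "y \<in> S" and e: "(\<lambda>x. (fst x, fst (snd x), fst (snd (snd x)))) x = (\<lambda>x. (fst x, fst (snd x), fst (snd (snd x)))) y"
  have g: "x \<in> Gamma4" "y \<in> Gamma4" using xy S by auto
  obtain x1 x2 x3 x4 where xe: "x = (x1, x2, x3, x4)" by (cases x) auto
  obtain y1 y2 y3 y4 where ye: "y = (y1, y2, y3, y4)" by (cases y) auto
  have "x1 + x2 + x3 + x4 = 0" "y1 + y2 + y3 + y4 = 0" using G4[OF g(1)] G4[OF g(2)] xe ye by auto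
  moreover have e': "x1 = y1 \<and> x2 = y2 \<and> x3 = y3" using e unfolding xe ye by simp
  ultimately have "x1 = y1" "x2 = y2" "x3 = y3" "x4 = y4" by linarith+
  then show "x = y" unfolding xe ye by simp
qed

lemma S6_sum:
  fixes F G :: "int \<Rightarrow> real"
  assumes S: "finite S" "S \<subseteq> Gamma4" and F0: "\<And>x. F x \<ge> 0" and G0: "\<And>x. G x \<ge> 0"
    and FL: "\<And>T. finite T \<Longrightarrow> (\<Sum>x\<in>T. (F x)^2) \<le> L"
    and GE: "\<And>T. finite T \<Longrightarrow> (\<Sum>x\<in>T. (G x)^2) \<le> E"
  shows "(\<Sum>x\<in>S. S6 F G x) \<le> 6 * (12 * L * E)"
proof -
  note ws = Wsum[OF S(1) _ F0 G0 FL GE]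
  show ?thesis unfolding S6_alt sum.distrib
    using ws[OF G4_inj1[OF S(2)]] ws[OF G4_inj2[OF S(2)]] ws[OF G4_inj3[OF S(2)]]
      ws[OF G4_inj4[OF S(2)]] ws[OF G4_inj5[OF S(2)]] ws[OF G4_inj6[OF S(2)]]
    by linarith
qed

theorem lemma4p5:
  fixes \<beta> K :: real
  shows "\<exists>C>0. \<forall>(a :: real \<Rightarrow> real) (fc :: int \<Rightarrow> complex).
           smooth_fun a \<longrightarrow> condA K a \<longrightarrow>
           (\<lambda>\<xi>. (cmod (fc \<xi>))\<^sup>2) summable_on UNIV \<longrightarrow>
           (\<lambda>\<xi>. a (of_int \<xi>) * (cmod (fc \<xi>))\<^sup>2) summable_on UNIV \<longrightarrow>
           (E1_summand \<beta> a fc summable_on Gamma4 \<and>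
            cmod (E1 \<beta> a fc) \<le> C * L2sq fc * E0 a fc)"
proof -
  define C where "C = 288 * (\<bar>\<beta>\<bar> * \<bar>(4 + 10 * K)^2 + 2 * (1 + K)\<bar>) * K^2 + 1"
  have "0 \<le> 288 * (\<bar>\<beta>\<bar> * \<bar>(4 + 10 * K)^2 + 2 * (1 + K)\<bar>) * K^2" by simp
  then have C0: "C > 0" unfolding C_def by linarith
  have main: "E1_summand \<beta> a fc summable_on Gamma4 \<and> cmod (E1 \<beta> a fc) \<le> C * L2sq fc * E0 a fc"
    if sm: "smooth_fun a" and cA: "condA K a"
      and s1: "(\<lambda>\<xi>. (cmod (fc \<xi>))\<^sup>2) summable_on UNIV"
      and s2: "(\<lambda>\<xi>. a (of_int \<xi>) * (cmod (fc \<xi>))\<^sup>2) summable_on UNIV" for a fc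
  proof -
    interpret AC a K using sm cA by unfold_locales
    define L E where "L = L2sq fc" and "E = E0 a fc"
    have L0: "L \<ge> 0" unfolding L_def L2sq_def by (intro infsum_nonneg) auto
    have E0: "E \<ge> 0" unfolding E_def E0_def by (intro infsum_nonneg) (auto intro!: mult_nonneg_nonneg less_imp_le[OF apos])
    have Cb0: "Cb \<beta> \<ge> 0" unfolding Cb_def C3_def using Kpos by simp
    define Bd where "Bd = 288 * Cb \<beta> * K^2 * L * E"
    have fin: "(\<Sum>x\<in>S. cmod (E1_summand \<beta> a fc x)) \<le> Bd" if S: "finite S" "S \<subseteq> Gamma4" for S
    proof -
      have "(\<Sum>x\<in>S. cmod (E1_summand \<beta> a fc x)) \<le> (\<Sum>x\<in>S. Cb \<beta> * K^2 * S6 (Ff fc) (Gf a fc) x)"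
        using S by (intro sum_mono summand_bound) auto
      also have "\<dots> = Cb \<beta> * K^2 * (\<Sum>x\<in>S. S6 (Ff fc) (Gf a fc) x)" by (simp add: sum_distrib_left)
      also have "\<dots> \<le> Cb \<beta> * K^2 * (6 * (12 * (2 * L) * (2 * E)))"
      proof (rule mult_left_mono)
        show "(\<Sum>x\<in>S. S6 (Ff fc) (Gf a fc) x) \<le> 6 * (12 * (2 * L) * (2 * E))"
        proof (rule S6_sum[OF S])
          show "\<And>x. Ff fc x \<ge> 0" by (rule Ff_nonneg)
          show "\<And>x. Gf a fc x \<ge> 0" unfolding Gf_def
            by (intro mult_nonneg_nonneg real_sqrt_ge_zero Ff_nonneg less_imp_le[OF apos])
          show "\<And>T. finite T \<Longrightarrow> (\<Sum>x\<in>T. (Ff fc x)^2) \<le> 2 * L" unfolding L_def using s1 by (rule FL)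
          show "\<And>T. finite T \<Longrightarrow> (\<Sum>x\<in>T. (Gf a fc x)^2) \<le> 2 * E" unfolding E_def using s2 by (rule GE)
        qed
      qed (use Cb0 in simp)
      also have "\<dots> = Bd" unfolding Bd_def by simp
      finally show ?thesis .
    qed
    have nsum: "(\<lambda>x. norm (E1_summand \<beta> a fc x)) summable_on Gamma4"
    proof (rule nonneg_bdd_above_summable_on)
      show "bdd_above (sum (\<lambda>x. norm (E1_summand \<beta> a fc x)) ` {F. F \<subseteq> Gamma4 \<and> finite F})"
        using fin by (intro bdd_aboveI[of _ Bd]) auto
    qed simp
    have summ: "E1_summand \<beta> a fc summable_on Gamma4" using nsum by (rule abs_summable_summable)
    have "cmod (E1 \<beta> a fc) \<le> infsum (\<lambda>x. norm (E1_summand \<beta> a fc x)) Gamma4"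
      unfolding E1_def using nsum by (rule norm_infsum_bound)
    also have "\<dots> \<le> Bd" using nsum by (rule infsum_le_finite_sums) (use fin in auto)
    also have "Bd \<le> C * L * E"
    proof -
      have "Cb \<beta> \<le> \<bar>\<beta>\<bar> * \<bar>(4 + 10 * K)^2 + 2 * (1 + K)\<bar>" unfolding Cb_eq
        by (intro mult_left_mono) auto
      then have "288 * Cb \<beta> * K^2 \<le> 288 * (\<bar>\<beta>\<bar> * \<bar>(4 + 10 * K)^2 + 2 * (1 + K)\<bar>) * K^2"
        by (intro mult_right_mono) auto
      then have "288 * Cb \<beta> * K^2 \<le> C" unfolding C_def by linarith
      then show ?thesis unfolding Bd_def using L0 E0
        by (metis mult.assoc mult_nonneg_nonneg mult_right_mono)
    qed
    finally show ?thesis using summ unfolding L_def E_def by simp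
  qed
  show ?thesis using C0 main by blast
qed

end
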